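(* Let $L\subseteq G_3$ be the subgroup of elements that fix every edge sticker and send every corner cubelet back to its own position, and let $K=\ker\phi\subseteq G_2$. Then $\psi$ restricts to an isomorphism $L\to K$.
   Context: The $3\times3\times3$ Rubik's cube consists of 8 corner cubelets (3 stickers each), 12 edge cubelets (2 stickers each) and 6 face-center cubelets. $G_3$ is the group of permutations of the 48 corner and edge stickers generated by the six moves $u_3,d_3,f_3,b_3,l_3,r_3$ rotating respectively the top, bottom, front, back, left, right layer of nine cubelets by $90^\circ$ clockwise as seen from outside facing that face. $G_2$ is the analogous group for the $2\times2\times2$ cube (8 corner cubelets, 24 stickers) with generators $u_2,\dots,r_2$; $\psi:G_3\to G_2$ is the homomorphism with $u_3\mapsto u_2$, $d_3\mapsto d_2$, etc. (recording the action on corner stickers), and $\phi:G_2\to S_8$ records the permutation of the 8 corner positions. *)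

theory Defs
  imports "HOL-Algebra.Group" "HOL-Algebra.Generated_Groups" "HOL-Combinatorics.Permutations"
begin

text \<open>Coordinates: x = right, y = up, z = front. Cubelet positions are integer
vectors in {-1,0,1}^3; a sticker is a pair (position of its cubelet, outward unit
normal of the face it lies on).\<close>

type_synonym vec = "int \<times> int \<times> int"
type_synonym sticker = "vec \<times> vec"

definition axis_vecs :: "vec \<Rightarrow> vec set" where
  "axis_vecs p = (case p of (x,y,z) \<Rightarrow> {(x,0,0), (0,y,0), (0,0,z)} - {(0,0,0)})"

definition corner_positions :: "vec set" where
  "corner_positions = {(x,y,z). x \<in> {-1,1} \<and> y \<in> {-1,1} \<and> z \<in> {-1,1}}"

definition edge_positions :: "vec set" where
  "edge_positions = {(x,y,z). x \<in> {-1,0,1} \<and> y \<in> {-1,0,1} \<and> z \<in> {-1,0,1} \<and>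
      card ({i. i < (3::nat) \<and> [x,y,z] ! i = 0}) = 1}"

definition corner_stickers :: "sticker set" where
  "corner_stickers = {(p,n). p \<in> corner_positions \<and> n \<in> axis_vecs p}"

definition edge_stickers :: "sticker set" where
  "edge_stickers = {(p,n). p \<in> edge_positions \<and> n \<in> axis_vecs p}"

definition stickers3 :: "sticker set" where
  "stickers3 = corner_stickers \<union> edge_stickers"

text \<open>Rotations by 90 degrees clockwise as seen from outside facing the face.\<close>
definition rot_u :: "vec \<Rightarrow> vec" where "rot_u v = (case v of (x,y,z) \<Rightarrow> (-z,y,x))"
definition rot_d :: "vec \<Rightarrow> vec" where "rot_d v = (case v of (x,y,z) \<Rightarrow> (z,y,-x))"
definition rot_r :: "vec \<Rightarrow> vec" where "rot_r v = (case v of (x,y,z) \<Rightarrow> (x,z,-y))"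
definition rot_l :: "vec \<Rightarrow> vec" where "rot_l v = (case v of (x,y,z) \<Rightarrow> (x,-z,y))"
definition rot_f :: "vec \<Rightarrow> vec" where "rot_f v = (case v of (x,y,z) \<Rightarrow> (y,-x,z))"
definition rot_b :: "vec \<Rightarrow> vec" where "rot_b v = (case v of (x,y,z) \<Rightarrow> (-y,x,z))"

definition layer_move :: "sticker set \<Rightarrow> (vec \<Rightarrow> bool) \<Rightarrow> (vec \<Rightarrow> vec) \<Rightarrow> sticker \<Rightarrow> sticker" where
  "layer_move S inlayer R s = (if s \<in> S \<and> inlayer (fst s) then (R (fst s), R (snd s)) else s)"

definition moves :: "sticker set \<Rightarrow> (sticker \<Rightarrow> sticker) set" where
  "moves S = {layer_move S (\<lambda>(x,y,z). y = 1) rot_u,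
              layer_move S (\<lambda>(x,y,z). y = -1) rot_d,
              layer_move S (\<lambda>(x,y,z). z = 1) rot_f,
              layer_move S (\<lambda>(x,y,z). z = -1) rot_b,
              layer_move S (\<lambda>(x,y,z). x = -1) rot_l,
              layer_move S (\<lambda>(x,y,z). x = 1) rot_r}"

definition perm_group :: "'a set \<Rightarrow> ('a \<Rightarrow> 'a) monoid" where
  "perm_group S = \<lparr>carrier = {p. p permutes S}, monoid.mult = (\<circ>), one = id\<rparr>"

definition G3 :: "(sticker \<Rightarrow> sticker) monoid" where
  "G3 = (perm_group stickers3)\<lparr>carrier := generate (perm_group stickers3) (moves stickers3)\<rparr>"

definition G2 :: "(sticker \<Rightarrow> sticker) monoid" where
  "G2 = (perm_group corner_stickers)\<lparr>carrier := generate (perm_group corner_stickers) (moves corner_stickers)\<rparr>"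

definition psi :: "(sticker \<Rightarrow> sticker) \<Rightarrow> (sticker \<Rightarrow> sticker)" where
  "psi g = (\<lambda>s. if s \<in> corner_stickers then g s else s)"

definition S8 :: "(vec \<Rightarrow> vec) monoid" where
  "S8 = perm_group corner_positions"

definition phi :: "(sticker \<Rightarrow> sticker) \<Rightarrow> (vec \<Rightarrow> vec)" where
  "phi g = (\<lambda>p. if p \<in> corner_positions then fst (g (p, (fst p, 0, 0))) else p)"

definition L_sub :: "(sticker \<Rightarrow> sticker) set" where
  "L_sub = {g \<in> carrier G3. (\<forall>s \<in> edge_stickers. g s = s) \<and>
                           (\<forall>s \<in> corner_stickers. fst (g s) = fst s)}"

definition K_sub :: "(sticker \<Rightarrow> sticker) set" where
  "K_sub = kernel G2 S8 phi"

end

theory Submission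
  imports Defs
begin

section \<open>Generic facts about permutation groups\<close>

lemma perm_group_simps[simp]:
  "carrier (perm_group S) = {p. p permutes S}"
  "x \<otimes>\<^bsub>perm_group S\<^esub> y = x \<circ> y"
  "\<one>\<^bsub>perm_group S\<^esub> = id"
  by (simp_all add: perm_group_def)

lemma group_perm_group: "group (perm_group S)"
proof (rule groupI)
  fix x assume "x \<in> carrier (perm_group S)"
  then have "x permutes S" by simp
  then show "\<exists>y\<in>carrier (perm_group S). y \<otimes>\<^bsub>perm_group S\<^esub> x = \<one>\<^bsub>perm_group S\<^esub>"
    by (intro bexI[of _ "inv_into UNIV x"]) (auto simp: permutes_inv permutes_inv_o)
qed (auto simp: permutes_compose permutes_id o_assoc)

lemma generate_perm_sub:
  assumes "M \<subseteq> {p. p permutes S}" "g \<in> generate (perm_group S) M"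
  shows "g permutes S"
  using group.generate_in_carrier[OF group_perm_group, of M S g] assms by simp

lemma quarter_permutes:
  assumes "\<And>x. x \<notin> S \<Longrightarrow> m x = x" "m \<circ> m \<circ> m \<circ> m = id"
  shows "m permutes S"
  unfolding permutes_def
proof (intro conjI allI impI)
  fix x assume "x \<notin> S" then show "m x = x" using assms(1) by simp
next
  fix y
  have e: "\<And>z. m (m (m (m z))) = z" using assms(2) by (metis comp_apply id_apply)
  show "\<exists>!x. m x = y"
  proof (rule ex1I[of _ "m (m (m y))"])
    show "m (m (m (m y))) = y" by (rule e)
    fix x assume "m x = y" then show "x = m (m (m y))" using e[of x] by simp
  qed
qed

lemma gen_induct:
  assumes M: "M \<subseteq> {p. p permutes S}"
    and quart: "\<And>m. m \<in> M \<Longrightarrow> m \<circ> m \<circ> m \<circ> m = id"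
    and P1: "P id"
    and PM: "\<And>m. m \<in> M \<Longrightarrow> P m"
    and Pc: "\<And>g h. g \<in> generate (perm_group S) M \<Longrightarrow> h \<in> generate (perm_group S) M \<Longrightarrow>
               P g \<Longrightarrow> P h \<Longrightarrow> P (g \<circ> h)"
    and x: "x \<in> generate (perm_group S) M"
  shows "P x"
  using x
proof (induction x rule: generate.induct)
  case one then show ?case using P1 by (simp add: id_def)
next
  case (incl h) then show ?case using PM by simp
next
  case (inv h)
  interpret group "perm_group S" by (rule group_perm_group)
  have hc: "h \<in> carrier (perm_group S)" using inv M by auto
  have h3c: "h \<circ> h \<circ> h \<in> carrier (perm_group S)" using hc by (simp add: permutes_compose)
  have "inv\<^bsub>perm_group S\<^esub> h = h \<circ> h \<circ> h"
    by (rule inv_equality) (use quart[OF inv] hc h3c in \<open>simp_all add: o_assoc\<close>)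
  moreover have g1: "h \<in> generate (perm_group S) M" using inv by (rule generate.incl)
  have g2: "h \<circ> h \<in> generate (perm_group S) M" using generate.eng[OF g1 g1] by simp
  have "P (h \<circ> h)" using Pc[OF g1 g1] PM[OF inv] by simp
  then have "P (h \<circ> h \<circ> h)" using Pc[OF g2 g1] PM[OF inv] by simp
  ultimately show ?case by metis
next
  case (eng h1 h2)
  have "h1 \<otimes>\<^bsub>perm_group S\<^esub> h2 = h1 \<circ> h2" by simp
  then show ?case using Pc[OF eng.hyps(1) eng.hyps(2) eng.IH(1) eng.IH(2)] by (simp only:)
qed

lemma gen_comp:
  "g \<in> generate (perm_group S) M \<Longrightarrow> h \<in> generate (perm_group S) M \<Longrightarrow>
   g \<circ> h \<in> generate (perm_group S) M"
  using generate.eng[of g "perm_group S" M h] by simp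

section \<open>Concrete description of the sticker sets\<close>

lemma card_zeros:
  "card {i. i < (3::nat) \<and> [x,y,z] ! i = (0::int)} =
     (if x = 0 then 1 else 0) + (if y = 0 then 1 else 0) + (if z = 0 then 1 else 0)"
proof -
  have "{i. i < (3::nat) \<and> [x,y,z] ! i = (0::int)} =
     {i. (i = 0 \<and> x = 0) \<or> (i = 1 \<and> y = 0) \<or> (i = 2 \<and> z = 0)}"
  proof (rule Set.set_eqI)
    fix i :: nat
    consider "i = 0" | "i = 1" | "i = 2" | "i \<ge> 3" by linarith
    then show "i \<in> {i. i < (3::nat) \<and> [x,y,z] ! i = (0::int)} \<longleftrightarrow>
      i \<in> {i. (i = 0 \<and> x = 0) \<or> (i = 1 \<and> y = 0) \<or> (i = 2 \<and> z = 0)}"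
      by cases (auto simp: numeral_2_eq_2)
  qed
  then show ?thesis
    by (cases "x = 0"; cases "y = 0"; cases "z = 0"; simp add: Collect_disj_eq)
qed

lemma CP_eq: "corner_positions = {(- 1, - 1, - 1), (- 1, - 1, 1), (- 1, 1, - 1), (- 1, 1, 1),
   (1, - 1, - 1), (1, - 1, 1), (1, 1, - 1), (1, 1, 1)}"
  by (auto simp: corner_positions_def)

lemma EP_eq: "edge_positions = {(- 1, - 1, 0), (- 1, 0, - 1), (- 1, 0, 1), (- 1, 1, 0),
   (0, - 1, - 1), (0, - 1, 1), (0, 1, - 1), (0, 1, 1),
   (1, - 1, 0), (1, 0, - 1), (1, 0, 1), (1, 1, 0)}"
proof (rule Set.set_eqI)
  fix p :: vec
  obtain x y z where p: "p = (x,y,z)" by (cases p) auto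
  show "p \<in> edge_positions \<longleftrightarrow> p \<in> {(- 1, - 1, 0), (- 1, 0, - 1), (- 1, 0, 1), (- 1, 1, 0),
   (0, - 1, - 1), (0, - 1, 1), (0, 1, - 1), (0, 1, 1),
   (1, - 1, 0), (1, 0, - 1), (1, 0, 1), (1, 1, 0)}"
  proof -
    have cx: "x = -1 \<or> x = 0 \<or> x = 1 \<or> x \<notin> {-1,0,1}" by blast
    have cy: "y = -1 \<or> y = 0 \<or> y = 1 \<or> y \<notin> {-1,0,1}" by blast
    have cz: "z = -1 \<or> z = 0 \<or> z = 1 \<or> z \<notin> {-1,0,1}" by blast
    show "?thesis" unfolding p edge_positions_def mem_Collect_eq case_prod_conv card_zeros
      using cx cy cz by (elim disjE) simp_all
  qed
qed
definition U3 where "U3 = layer_move stickers3 (\<lambda>(x,y,z). y = 1) rot_u"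
definition D3 where "D3 = layer_move stickers3 (\<lambda>(x,y,z). y = -1) rot_d"
definition F3 where "F3 = layer_move stickers3 (\<lambda>(x,y,z). z = 1) rot_f"
definition B3 where "B3 = layer_move stickers3 (\<lambda>(x,y,z). z = -1) rot_b"
definition L3 where "L3 = layer_move stickers3 (\<lambda>(x,y,z). x = -1) rot_l"
definition R3 where "R3 = layer_move stickers3 (\<lambda>(x,y,z). x = 1) rot_r"
definition U2 where "U2 = layer_move corner_stickers (\<lambda>(x,y,z). y = 1) rot_u"
definition D2 where "D2 = layer_move corner_stickers (\<lambda>(x,y,z). y = -1) rot_d"
definition F2 where "F2 = layer_move corner_stickers (\<lambda>(x,y,z). z = 1) rot_f"
definition B2 where "B2 = layer_move corner_stickers (\<lambda>(x,y,z). z = -1) rot_b"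
definition L2 where "L2 = layer_move corner_stickers (\<lambda>(x,y,z). x = -1) rot_l"
definition R2 where "R2 = layer_move corner_stickers (\<lambda>(x,y,z). x = 1) rot_r"
definition U3i where "U3i = U3 \<circ> U3 \<circ> U3"
definition D3i where "D3i = D3 \<circ> D3 \<circ> D3"
definition F3i where "F3i = F3 \<circ> F3 \<circ> F3"
definition B3i where "B3i = B3 \<circ> B3 \<circ> B3"
definition L3i where "L3i = L3 \<circ> L3 \<circ> L3"
definition R3i where "R3i = R3 \<circ> R3 \<circ> R3"

lemma moves3_eq: "moves stickers3 = {U3, D3, F3, B3, L3, R3}"
  by (simp add: moves_def U3_def D3_def F3_def B3_def L3_def R3_def)
lemma moves2_eq: "moves corner_stickers = {U2, D2, F2, B2, L2, R2}"
  by (simp add: moves_def U2_def D2_def F2_def B2_def L2_def R2_def)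

lemma CS_eq: "corner_stickers = {((- 1, - 1, - 1), (- 1, 0, 0)), ((- 1, - 1, - 1), (0, - 1, 0)), ((- 1, - 1, - 1), (0, 0, - 1)), ((- 1, - 1, 1), (- 1, 0, 0)), ((- 1, - 1, 1), (0, - 1, 0)), ((- 1, - 1, 1), (0, 0, 1)), ((- 1, 1, - 1), (- 1, 0, 0)), ((- 1, 1, - 1), (0, 1, 0)), ((- 1, 1, - 1), (0, 0, - 1)), ((- 1, 1, 1), (- 1, 0, 0)), ((- 1, 1, 1), (0, 1, 0)), ((- 1, 1, 1), (0, 0, 1)), ((1, - 1, - 1), (1, 0, 0)), ((1, - 1, - 1), (0, - 1, 0)), ((1, - 1, - 1), (0, 0, - 1)), ((1, - 1, 1), (1, 0, 0)), ((1, - 1, 1), (0, - 1, 0)), ((1, - 1, 1), (0, 0, 1)), ((1, 1, - 1), (1, 0, 0)), ((1, 1, - 1), (0, 1, 0)), ((1, 1, - 1), (0, 0, - 1)), ((1, 1, 1), (1, 0, 0)), ((1, 1, 1), (0, 1, 0)), ((1, 1, 1), (0, 0, 1))}"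
proof (rule Set.set_eqI)
  fix s :: sticker
  obtain p n where s: "s = (p,n)" by (cases s)
  show "s \<in> corner_stickers \<longleftrightarrow> s \<in> {((- 1, - 1, - 1), (- 1, 0, 0)), ((- 1, - 1, - 1), (0, - 1, 0)), ((- 1, - 1, - 1), (0, 0, - 1)), ((- 1, - 1, 1), (- 1, 0, 0)), ((- 1, - 1, 1), (0, - 1, 0)), ((- 1, - 1, 1), (0, 0, 1)), ((- 1, 1, - 1), (- 1, 0, 0)), ((- 1, 1, - 1), (0, 1, 0)), ((- 1, 1, - 1), (0, 0, - 1)), ((- 1, 1, 1), (- 1, 0, 0)), ((- 1, 1, 1), (0, 1, 0)), ((- 1, 1, 1), (0, 0, 1)), ((1, - 1, - 1), (1, 0, 0)), ((1, - 1, - 1), (0, - 1, 0)), ((1, - 1, - 1), (0, 0, - 1)), ((1, - 1, 1), (1, 0, 0)), ((1, - 1, 1), (0, - 1, 0)), ((1, - 1, 1), (0, 0, 1)), ((1, 1, - 1), (1, 0, 0)), ((1, 1, - 1), (0, 1, 0)), ((1, 1, - 1), (0, 0, - 1)), ((1, 1, 1), (1, 0, 0)), ((1, 1, 1), (0, 1, 0)), ((1, 1, 1), (0, 0, 1))}"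
  proof (cases "p \<in> corner_positions")
    case True
 then have "p = (- 1, - 1, - 1) \<or> p = (- 1, - 1, 1) \<or> p = (- 1, 1, - 1) \<or> p = (- 1, 1, 1) \<or> p = (1, - 1, - 1) \<or> p = (1, - 1, 1) \<or> p = (1, 1, - 1) \<or> p = (1, 1, 1)" by (simp add: CP_eq)
    then show ?thesis unfolding s corner_stickers_def by (elim disjE) (auto simp: axis_vecs_def CP_eq)
  next
    case False
    then show ?thesis unfolding s corner_stickers_def by (auto simp: CP_eq)
  qed
qed

lemma ES_eq: "edge_stickers = {((- 1, - 1, 0), (- 1, 0, 0)), ((- 1, - 1, 0), (0, - 1, 0)), ((- 1, 0, - 1), (- 1, 0, 0)), ((- 1, 0, - 1), (0, 0, - 1)), ((- 1, 0, 1), (- 1, 0, 0)), ((- 1, 0, 1), (0, 0, 1)), ((- 1, 1, 0), (- 1, 0, 0)), ((- 1, 1, 0), (0, 1, 0)), ((0, - 1, - 1), (0, - 1, 0)), ((0, - 1, - 1), (0, 0, - 1)), ((0, - 1, 1), (0, - 1, 0)), ((0, - 1, 1), (0, 0, 1)), ((0, 1, - 1), (0, 1, 0)), ((0, 1, - 1), (0, 0, - 1)), ((0, 1, 1), (0, 1, 0)), ((0, 1, 1), (0, 0, 1)), ((1, - 1, 0), (1, 0, 0)), ((1, - 1, 0), (0, - 1, 0)), ((1, 0, - 1), (1, 0, 0)), ((1, 0, - 1), (0, 0, - 1)), ((1, 0, 1), (1, 0, 0)), ((1, 0, 1), (0, 0, 1)), ((1, 1, 0), (1, 0, 0)), ((1,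 1, 0), (0, 1, 0))}"
proof (rule Set.set_eqI)
  fix s :: sticker
  obtain p n where s: "s = (p,n)" by (cases s)
  show "s \<in> edge_stickers \<longleftrightarrow> s \<in> {((- 1, - 1, 0), (- 1, 0, 0)), ((- 1, - 1, 0), (0, - 1, 0)), ((- 1, 0, - 1), (- 1, 0, 0)), ((- 1, 0, - 1), (0, 0, - 1)), ((- 1, 0, 1), (- 1, 0, 0)), ((- 1, 0, 1), (0, 0, 1)), ((- 1, 1, 0), (- 1, 0, 0)), ((- 1, 1, 0), (0, 1, 0)), ((0, - 1, - 1), (0, - 1, 0)), ((0, - 1, - 1), (0, 0, - 1)), ((0, - 1, 1), (0, - 1, 0)), ((0, - 1, 1), (0, 0, 1)), ((0, 1, - 1), (0, 1, 0)), ((0, 1, - 1), (0, 0, - 1)), ((0, 1, 1), (0, 1, 0)), ((0, 1, 1), (0, 0, 1)), ((1, - 1, 0), (1, 0, 0)), ((1, - 1, 0), (0, - 1, 0)), ((1, 0, - 1), (1, 0, 0)), ((1, 0, - 1), (0, 0, - 1)), ((1, 0, 1), (1, 0, 0)), ((1, 0, 1), (0, 0, 1)), ((1, 1, 0), (1, 0, 0)), ((1, 1, 0), (0, 1, 0))}"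
  proof (cases "p \<in> edge_positions")
    case True
 then have "p = (- 1, - 1, 0) \<or> p = (- 1, 0, - 1) \<or> p = (- 1, 0, 1) \<or> p = (- 1, 1, 0) \<or> p = (0, - 1, - 1) \<or> p = (0, - 1, 1) \<or> p = (0, 1, - 1) \<or> p = (0, 1, 1) \<or> p = (1, - 1, 0) \<or> p = (1, 0, - 1) \<or> p = (1, 0, 1) \<or> p = (1, 1, 0)" by (simp add: EP_eq)
    then show ?thesis unfolding s edge_stickers_def by (elim disjE) (auto simp: axis_vecs_def EP_eq)
  next
    case False
    then show ?thesis unfolding s edge_stickers_def by (auto simp: EP_eq)
  qed
qed
lemma S3_eq: "stickers3 = corner_stickers \<union> edge_stickers"
  by (simp add: stickers3_def)
lemma U3_tab[simp]:
  "U3 ((- 1, - 1, - 1), (- 1, 0, 0)) = ((- 1, - 1, - 1), (- 1, 0, 0))"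
  "U3 ((- 1, - 1, - 1), (0, - 1, 0)) = ((- 1, - 1, - 1), (0, - 1, 0))"
  "U3 ((- 1, - 1, - 1), (0, 0, - 1)) = ((- 1, - 1, - 1), (0, 0, - 1))"
  "U3 ((- 1, - 1, 1), (- 1, 0, 0)) = ((- 1, - 1, 1), (- 1, 0, 0))"
  "U3 ((- 1, - 1, 1), (0, - 1, 0)) = ((- 1, - 1, 1), (0, - 1, 0))"
  "U3 ((- 1, - 1, 1), (0, 0, 1)) = ((- 1, - 1, 1), (0, 0, 1))"
  "U3 ((- 1, 1, - 1), (- 1, 0, 0)) = ((1, 1, - 1), (0, 0, - 1))"
  "U3 ((- 1, 1, - 1), (0, 1, 0)) = ((1, 1, - 1), (0, 1, 0))"
  "U3 ((- 1, 1, - 1), (0, 0, - 1)) = ((1, 1, - 1), (1, 0, 0))"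
  "U3 ((- 1, 1, 1), (- 1, 0, 0)) = ((- 1, 1, - 1), (0, 0, - 1))"
  "U3 ((- 1, 1, 1), (0, 1, 0)) = ((- 1, 1, - 1), (0, 1, 0))"
  "U3 ((- 1, 1, 1), (0, 0, 1)) = ((- 1, 1, - 1), (- 1, 0, 0))"
  "U3 ((1, - 1, - 1), (1, 0, 0)) = ((1, - 1, - 1), (1, 0, 0))"
  "U3 ((1, - 1, - 1), (0, - 1, 0)) = ((1, - 1, - 1), (0, - 1, 0))"
  "U3 ((1, - 1, - 1), (0, 0, - 1)) = ((1, - 1, - 1), (0, 0, - 1))"
  "U3 ((1, - 1, 1), (1, 0, 0)) = ((1, - 1, 1), (1, 0, 0))"
  "U3 ((1, - 1, 1), (0, - 1, 0)) = ((1, - 1, 1), (0, - 1, 0))"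
  "U3 ((1, - 1, 1), (0, 0, 1)) = ((1, - 1, 1), (0, 0, 1))"
  "U3 ((1, 1, - 1), (1, 0, 0)) = ((1, 1, 1), (0, 0, 1))"
  "U3 ((1, 1, - 1), (0, 1, 0)) = ((1, 1, 1), (0, 1, 0))"
  "U3 ((1, 1, - 1), (0, 0, - 1)) = ((1, 1, 1), (1, 0, 0))"
  "U3 ((1, 1, 1), (1, 0, 0)) = ((- 1, 1, 1), (0, 0, 1))"
  "U3 ((1, 1, 1), (0, 1, 0)) = ((- 1, 1, 1), (0, 1, 0))"
  "U3 ((1, 1, 1), (0, 0, 1)) = ((- 1, 1, 1), (- 1, 0, 0))"
  "U3 ((- 1, - 1, 0), (- 1, 0, 0)) = ((- 1, - 1, 0), (- 1, 0, 0))"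
  "U3 ((- 1, - 1, 0), (0, - 1, 0)) = ((- 1, - 1, 0), (0, - 1, 0))"
  "U3 ((- 1, 0, - 1), (- 1, 0, 0)) = ((- 1, 0, - 1), (- 1, 0, 0))"
  "U3 ((- 1, 0, - 1), (0, 0, - 1)) = ((- 1, 0, - 1), (0, 0, - 1))"
  "U3 ((- 1, 0, 1), (- 1, 0, 0)) = ((- 1, 0, 1), (- 1, 0, 0))"
  "U3 ((- 1, 0, 1), (0, 0, 1)) = ((- 1, 0, 1), (0, 0, 1))"
  "U3 ((- 1, 1, 0), (- 1, 0, 0)) = ((0, 1, - 1), (0, 0, - 1))"
  "U3 ((- 1, 1, 0), (0, 1, 0)) = ((0, 1, - 1), (0, 1, 0))"
  "U3 ((0, - 1, - 1), (0, - 1, 0)) = ((0, - 1, - 1), (0, - 1, 0))"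
  "U3 ((0, - 1, - 1), (0, 0, - 1)) = ((0, - 1, - 1), (0, 0, - 1))"
  "U3 ((0, - 1, 1), (0, - 1, 0)) = ((0, - 1, 1), (0, - 1, 0))"
  "U3 ((0, - 1, 1), (0, 0, 1)) = ((0, - 1, 1), (0, 0, 1))"
  "U3 ((0, 1, - 1), (0, 1, 0)) = ((1, 1, 0), (0, 1, 0))"
  "U3 ((0, 1, - 1), (0, 0, - 1)) = ((1, 1, 0), (1, 0, 0))"
  "U3 ((0, 1, 1), (0, 1, 0)) = ((- 1, 1, 0), (0, 1, 0))"
  "U3 ((0, 1, 1), (0, 0, 1)) = ((- 1, 1, 0), (- 1, 0, 0))"
  "U3 ((1, - 1, 0), (1, 0, 0)) = ((1, - 1, 0), (1, 0, 0))"
  "U3 ((1, - 1, 0), (0, - 1, 0)) = ((1, - 1, 0), (0, - 1, 0))"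
  "U3 ((1, 0, - 1), (1, 0, 0)) = ((1, 0, - 1), (1, 0, 0))"
  "U3 ((1, 0, - 1), (0, 0, - 1)) = ((1, 0, - 1), (0, 0, - 1))"
  "U3 ((1, 0, 1), (1, 0, 0)) = ((1, 0, 1), (1, 0, 0))"
  "U3 ((1, 0, 1), (0, 0, 1)) = ((1, 0, 1), (0, 0, 1))"
  "U3 ((1, 1, 0), (1, 0, 0)) = ((0, 1, 1), (0, 0, 1))"
  "U3 ((1, 1, 0), (0, 1, 0)) = ((0, 1, 1), (0, 1, 0))"
  by (simp_all add: U3_def layer_move_def S3_eq CS_eq ES_eq rot_u_def)
lemma U3i_tab[simp]:
  "U3i ((- 1, - 1, - 1), (- 1, 0, 0)) = ((- 1, - 1, - 1), (- 1, 0, 0))"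
  "U3i ((- 1, - 1, - 1), (0, - 1, 0)) = ((- 1, - 1, - 1), (0, - 1, 0))"
  "U3i ((- 1, - 1, - 1), (0, 0, - 1)) = ((- 1, - 1, - 1), (0, 0, - 1))"
  "U3i ((- 1, - 1, 1), (- 1, 0, 0)) = ((- 1, - 1, 1), (- 1, 0, 0))"
  "U3i ((- 1, - 1, 1), (0, - 1, 0)) = ((- 1, - 1, 1), (0, - 1, 0))"
  "U3i ((- 1, - 1, 1), (0, 0, 1)) = ((- 1, - 1, 1), (0, 0, 1))"
  "U3i ((- 1, 1, - 1), (- 1, 0, 0)) = ((- 1, 1, 1), (0, 0, 1))"
  "U3i ((- 1, 1, - 1), (0, 1, 0)) = ((- 1, 1, 1), (0, 1, 0))"
  "U3i ((- 1, 1, - 1), (0, 0, - 1)) = ((- 1, 1, 1), (- 1, 0, 0))"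
  "U3i ((- 1, 1, 1), (- 1, 0, 0)) = ((1, 1, 1), (0, 0, 1))"
  "U3i ((- 1, 1, 1), (0, 1, 0)) = ((1, 1, 1), (0, 1, 0))"
  "U3i ((- 1, 1, 1), (0, 0, 1)) = ((1, 1, 1), (1, 0, 0))"
  "U3i ((1, - 1, - 1), (1, 0, 0)) = ((1, - 1, - 1), (1, 0, 0))"
  "U3i ((1, - 1, - 1), (0, - 1, 0)) = ((1, - 1, - 1), (0, - 1, 0))"
  "U3i ((1, - 1, - 1), (0, 0, - 1)) = ((1, - 1, - 1), (0, 0, - 1))"
  "U3i ((1, - 1, 1), (1, 0, 0)) = ((1, - 1, 1), (1, 0, 0))"
  "U3i ((1, - 1, 1), (0, - 1, 0)) = ((1, - 1, 1), (0, - 1, 0))"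
  "U3i ((1, - 1, 1), (0, 0, 1)) = ((1, - 1, 1), (0, 0, 1))"
  "U3i ((1, 1, - 1), (1, 0, 0)) = ((- 1, 1, - 1), (0, 0, - 1))"
  "U3i ((1, 1, - 1), (0, 1, 0)) = ((- 1, 1, - 1), (0, 1, 0))"
  "U3i ((1, 1, - 1), (0, 0, - 1)) = ((- 1, 1, - 1), (- 1, 0, 0))"
  "U3i ((1, 1, 1), (1, 0, 0)) = ((1, 1, - 1), (0, 0, - 1))"
  "U3i ((1, 1, 1), (0, 1, 0)) = ((1, 1, - 1), (0, 1, 0))"
  "U3i ((1, 1, 1), (0, 0, 1)) = ((1, 1, - 1), (1, 0, 0))"
  "U3i ((- 1, - 1, 0), (- 1, 0, 0)) = ((- 1, - 1, 0), (- 1, 0, 0))"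
  "U3i ((- 1, - 1, 0), (0, - 1, 0)) = ((- 1, - 1, 0), (0, - 1, 0))"
  "U3i ((- 1, 0, - 1), (- 1, 0, 0)) = ((- 1, 0, - 1), (- 1, 0, 0))"
  "U3i ((- 1, 0, - 1), (0, 0, - 1)) = ((- 1, 0, - 1), (0, 0, - 1))"
  "U3i ((- 1, 0, 1), (- 1, 0, 0)) = ((- 1, 0, 1), (- 1, 0, 0))"
  "U3i ((- 1, 0, 1), (0, 0, 1)) = ((- 1, 0, 1), (0, 0, 1))"
  "U3i ((- 1, 1, 0), (- 1, 0, 0)) = ((0, 1, 1), (0, 0, 1))"
  "U3i ((- 1, 1, 0), (0, 1, 0)) = ((0, 1, 1), (0, 1, 0))"
  "U3i ((0, - 1, - 1), (0, - 1, 0)) = ((0, - 1, - 1), (0, - 1, 0))"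
  "U3i ((0, - 1, - 1), (0, 0, - 1)) = ((0, - 1, - 1), (0, 0, - 1))"
  "U3i ((0, - 1, 1), (0, - 1, 0)) = ((0, - 1, 1), (0, - 1, 0))"
  "U3i ((0, - 1, 1), (0, 0, 1)) = ((0, - 1, 1), (0, 0, 1))"
  "U3i ((0, 1, - 1), (0, 1, 0)) = ((- 1, 1, 0), (0, 1, 0))"
  "U3i ((0, 1, - 1), (0, 0, - 1)) = ((- 1, 1, 0), (- 1, 0, 0))"
  "U3i ((0, 1, 1), (0, 1, 0)) = ((1, 1, 0), (0, 1, 0))"
  "U3i ((0, 1, 1), (0, 0, 1)) = ((1, 1, 0), (1, 0, 0))"
  "U3i ((1, - 1, 0), (1, 0, 0)) = ((1, - 1, 0), (1, 0, 0))"
  "U3i ((1, - 1, 0), (0, - 1, 0)) = ((1, - 1, 0), (0, - 1, 0))"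
  "U3i ((1, 0, - 1), (1, 0, 0)) = ((1, 0, - 1), (1, 0, 0))"
  "U3i ((1, 0, - 1), (0, 0, - 1)) = ((1, 0, - 1), (0, 0, - 1))"
  "U3i ((1, 0, 1), (1, 0, 0)) = ((1, 0, 1), (1, 0, 0))"
  "U3i ((1, 0, 1), (0, 0, 1)) = ((1, 0, 1), (0, 0, 1))"
  "U3i ((1, 1, 0), (1, 0, 0)) = ((0, 1, - 1), (0, 0, - 1))"
  "U3i ((1, 1, 0), (0, 1, 0)) = ((0, 1, - 1), (0, 1, 0))"
  by (simp_all add: U3i_def)
lemma D3_tab[simp]:
  "D3 ((- 1, - 1, - 1), (- 1, 0, 0)) = ((- 1, - 1, 1), (0, 0, 1))"
  "D3 ((- 1, - 1, - 1), (0, - 1, 0)) = ((- 1, - 1, 1), (0, - 1, 0))"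
  "D3 ((- 1, - 1, - 1), (0, 0, - 1)) = ((- 1, - 1, 1), (- 1, 0, 0))"
  "D3 ((- 1, - 1, 1), (- 1, 0, 0)) = ((1, - 1, 1), (0, 0, 1))"
  "D3 ((- 1, - 1, 1), (0, - 1, 0)) = ((1, - 1, 1), (0, - 1, 0))"
  "D3 ((- 1, - 1, 1), (0, 0, 1)) = ((1, - 1, 1), (1, 0, 0))"
  "D3 ((- 1, 1, - 1), (- 1, 0, 0)) = ((- 1, 1, - 1), (- 1, 0, 0))"
  "D3 ((- 1, 1, - 1), (0, 1, 0)) = ((- 1, 1, - 1), (0, 1, 0))"
  "D3 ((- 1, 1, - 1), (0, 0, - 1)) = ((- 1, 1, - 1), (0, 0, - 1))"
  "D3 ((- 1, 1, 1), (- 1, 0, 0)) = ((- 1, 1, 1), (- 1, 0, 0))"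
  "D3 ((- 1, 1, 1), (0, 1, 0)) = ((- 1, 1, 1), (0, 1, 0))"
  "D3 ((- 1, 1, 1), (0, 0, 1)) = ((- 1, 1, 1), (0, 0, 1))"
  "D3 ((1, - 1, - 1), (1, 0, 0)) = ((- 1, - 1, - 1), (0, 0, - 1))"
  "D3 ((1, - 1, - 1), (0, - 1, 0)) = ((- 1, - 1, - 1), (0, - 1, 0))"
  "D3 ((1, - 1, - 1), (0, 0, - 1)) = ((- 1, - 1, - 1), (- 1, 0, 0))"
  "D3 ((1, - 1, 1), (1, 0, 0)) = ((1, - 1, - 1), (0, 0, - 1))"
  "D3 ((1, - 1, 1), (0, - 1, 0)) = ((1, - 1, - 1), (0, - 1, 0))"
  "D3 ((1, - 1, 1), (0, 0, 1)) = ((1, - 1, - 1), (1, 0, 0))"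
  "D3 ((1, 1, - 1), (1, 0, 0)) = ((1, 1, - 1), (1, 0, 0))"
  "D3 ((1, 1, - 1), (0, 1, 0)) = ((1, 1, - 1), (0, 1, 0))"
  "D3 ((1, 1, - 1), (0, 0, - 1)) = ((1, 1, - 1), (0, 0, - 1))"
  "D3 ((1, 1, 1), (1, 0, 0)) = ((1, 1, 1), (1, 0, 0))"
  "D3 ((1, 1, 1), (0, 1, 0)) = ((1, 1, 1), (0, 1, 0))"
  "D3 ((1, 1, 1), (0, 0, 1)) = ((1, 1, 1), (0, 0, 1))"
  "D3 ((- 1, - 1, 0), (- 1, 0, 0)) = ((0, - 1, 1), (0, 0, 1))"
  "D3 ((- 1, - 1, 0), (0, - 1, 0)) = ((0, - 1, 1), (0, - 1, 0))"
  "D3 ((- 1, 0, - 1), (- 1, 0, 0)) = ((- 1, 0, - 1), (- 1, 0, 0))"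
  "D3 ((- 1, 0, - 1), (0, 0, - 1)) = ((- 1, 0, - 1), (0, 0, - 1))"
  "D3 ((- 1, 0, 1), (- 1, 0, 0)) = ((- 1, 0, 1), (- 1, 0, 0))"
  "D3 ((- 1, 0, 1), (0, 0, 1)) = ((- 1, 0, 1), (0, 0, 1))"
  "D3 ((- 1, 1, 0), (- 1, 0, 0)) = ((- 1, 1, 0), (- 1, 0, 0))"
  "D3 ((- 1, 1, 0), (0, 1, 0)) = ((- 1, 1, 0), (0, 1, 0))"
  "D3 ((0, - 1, - 1), (0, - 1, 0)) = ((- 1, - 1, 0), (0, - 1, 0))"
  "D3 ((0, - 1, - 1), (0, 0, - 1)) = ((- 1, - 1, 0), (- 1, 0, 0))"
  "D3 ((0, - 1, 1), (0, - 1, 0)) = ((1, - 1, 0), (0, - 1, 0))"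
  "D3 ((0, - 1, 1), (0, 0, 1)) = ((1, - 1, 0), (1, 0, 0))"
  "D3 ((0, 1, - 1), (0, 1, 0)) = ((0, 1, - 1), (0, 1, 0))"
  "D3 ((0, 1, - 1), (0, 0, - 1)) = ((0, 1, - 1), (0, 0, - 1))"
  "D3 ((0, 1, 1), (0, 1, 0)) = ((0, 1, 1), (0, 1, 0))"
  "D3 ((0, 1, 1), (0, 0, 1)) = ((0, 1, 1), (0, 0, 1))"
  "D3 ((1, - 1, 0), (1, 0, 0)) = ((0, - 1, - 1), (0, 0, - 1))"
  "D3 ((1, - 1, 0), (0, - 1, 0)) = ((0, - 1, - 1), (0, - 1, 0))"
  "D3 ((1, 0, - 1), (1, 0, 0)) = ((1, 0, - 1), (1, 0, 0))"
  "D3 ((1, 0, - 1), (0, 0, - 1)) = ((1, 0, - 1), (0, 0, - 1))"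
  "D3 ((1, 0, 1), (1, 0, 0)) = ((1, 0, 1), (1, 0, 0))"
  "D3 ((1, 0, 1), (0, 0, 1)) = ((1, 0, 1), (0, 0, 1))"
  "D3 ((1, 1, 0), (1, 0, 0)) = ((1, 1, 0), (1, 0, 0))"
  "D3 ((1, 1, 0), (0, 1, 0)) = ((1, 1, 0), (0, 1, 0))"
  by (simp_all add: D3_def layer_move_def S3_eq CS_eq ES_eq rot_d_def)
lemma D3i_tab[simp]:
  "D3i ((- 1, - 1, - 1), (- 1, 0, 0)) = ((1, - 1, - 1), (0, 0, - 1))"
  "D3i ((- 1, - 1, - 1), (0, - 1, 0)) = ((1, - 1, - 1), (0, - 1, 0))"
  "D3i ((- 1, - 1, - 1), (0, 0, - 1)) = ((1, - 1, - 1), (1, 0, 0))"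
  "D3i ((- 1, - 1, 1), (- 1, 0, 0)) = ((- 1, - 1, - 1), (0, 0, - 1))"
  "D3i ((- 1, - 1, 1), (0, - 1, 0)) = ((- 1, - 1, - 1), (0, - 1, 0))"
  "D3i ((- 1, - 1, 1), (0, 0, 1)) = ((- 1, - 1, - 1), (- 1, 0, 0))"
  "D3i ((- 1, 1, - 1), (- 1, 0, 0)) = ((- 1, 1, - 1), (- 1, 0, 0))"
  "D3i ((- 1, 1, - 1), (0, 1, 0)) = ((- 1, 1, - 1), (0, 1, 0))"
  "D3i ((- 1, 1, - 1), (0, 0, - 1)) = ((- 1, 1, - 1), (0, 0, - 1))"
  "D3i ((- 1, 1, 1), (- 1, 0, 0)) = ((- 1, 1, 1), (- 1, 0, 0))"
  "D3i ((- 1, 1, 1), (0, 1, 0)) = ((- 1, 1, 1), (0, 1, 0))"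
  "D3i ((- 1, 1, 1), (0, 0, 1)) = ((- 1, 1, 1), (0, 0, 1))"
  "D3i ((1, - 1, - 1), (1, 0, 0)) = ((1, - 1, 1), (0, 0, 1))"
  "D3i ((1, - 1, - 1), (0, - 1, 0)) = ((1, - 1, 1), (0, - 1, 0))"
  "D3i ((1, - 1, - 1), (0, 0, - 1)) = ((1, - 1, 1), (1, 0, 0))"
  "D3i ((1, - 1, 1), (1, 0, 0)) = ((- 1, - 1, 1), (0, 0, 1))"
  "D3i ((1, - 1, 1), (0, - 1, 0)) = ((- 1, - 1, 1), (0, - 1, 0))"
  "D3i ((1, - 1, 1), (0, 0, 1)) = ((- 1, - 1, 1), (- 1, 0, 0))"
  "D3i ((1, 1, - 1), (1, 0, 0)) = ((1, 1, - 1), (1, 0, 0))"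
  "D3i ((1, 1, - 1), (0, 1, 0)) = ((1, 1, - 1), (0, 1, 0))"
  "D3i ((1, 1, - 1), (0, 0, - 1)) = ((1, 1, - 1), (0, 0, - 1))"
  "D3i ((1, 1, 1), (1, 0, 0)) = ((1, 1, 1), (1, 0, 0))"
  "D3i ((1, 1, 1), (0, 1, 0)) = ((1, 1, 1), (0, 1, 0))"
  "D3i ((1, 1, 1), (0, 0, 1)) = ((1, 1, 1), (0, 0, 1))"
  "D3i ((- 1, - 1, 0), (- 1, 0, 0)) = ((0, - 1, - 1), (0, 0, - 1))"
  "D3i ((- 1, - 1, 0), (0, - 1, 0)) = ((0, - 1, - 1), (0, - 1, 0))"
  "D3i ((- 1, 0, - 1), (- 1, 0, 0)) = ((- 1, 0, - 1), (- 1, 0, 0))"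
  "D3i ((- 1, 0, - 1), (0, 0, - 1)) = ((- 1, 0, - 1), (0, 0, - 1))"
  "D3i ((- 1, 0, 1), (- 1, 0, 0)) = ((- 1, 0, 1), (- 1, 0, 0))"
  "D3i ((- 1, 0, 1), (0, 0, 1)) = ((- 1, 0, 1), (0, 0, 1))"
  "D3i ((- 1, 1, 0), (- 1, 0, 0)) = ((- 1, 1, 0), (- 1, 0, 0))"
  "D3i ((- 1, 1, 0), (0, 1, 0)) = ((- 1, 1, 0), (0, 1, 0))"
  "D3i ((0, - 1, - 1), (0, - 1, 0)) = ((1, - 1, 0), (0, - 1, 0))"
  "D3i ((0, - 1, - 1), (0, 0, - 1)) = ((1, - 1, 0), (1, 0, 0))"
  "D3i ((0, - 1, 1), (0, - 1, 0)) = ((- 1, - 1, 0), (0, - 1, 0))"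
  "D3i ((0, - 1, 1), (0, 0, 1)) = ((- 1, - 1, 0), (- 1, 0, 0))"
  "D3i ((0, 1, - 1), (0, 1, 0)) = ((0, 1, - 1), (0, 1, 0))"
  "D3i ((0, 1, - 1), (0, 0, - 1)) = ((0, 1, - 1), (0, 0, - 1))"
  "D3i ((0, 1, 1), (0, 1, 0)) = ((0, 1, 1), (0, 1, 0))"
  "D3i ((0, 1, 1), (0, 0, 1)) = ((0, 1, 1), (0, 0, 1))"
  "D3i ((1, - 1, 0), (1, 0, 0)) = ((0, - 1, 1), (0, 0, 1))"
  "D3i ((1, - 1, 0), (0, - 1, 0)) = ((0, - 1, 1), (0, - 1, 0))"
  "D3i ((1, 0, - 1), (1, 0, 0)) = ((1, 0, - 1), (1, 0, 0))"
  "D3i ((1, 0, - 1), (0, 0, - 1)) = ((1, 0, - 1), (0, 0, - 1))"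
  "D3i ((1, 0, 1), (1, 0, 0)) = ((1, 0, 1), (1, 0, 0))"
  "D3i ((1, 0, 1), (0, 0, 1)) = ((1, 0, 1), (0, 0, 1))"
  "D3i ((1, 1, 0), (1, 0, 0)) = ((1, 1, 0), (1, 0, 0))"
  "D3i ((1, 1, 0), (0, 1, 0)) = ((1, 1, 0), (0, 1, 0))"
  by (simp_all add: D3i_def)
lemma F3_tab[simp]:
  "F3 ((- 1, - 1, - 1), (- 1, 0, 0)) = ((- 1, - 1, - 1), (- 1, 0, 0))"
  "F3 ((- 1, - 1, - 1), (0, - 1, 0)) = ((- 1, - 1, - 1), (0, - 1, 0))"
  "F3 ((- 1, - 1, - 1), (0, 0, - 1)) = ((- 1, - 1, - 1), (0, 0, - 1))"
  "F3 ((- 1, - 1, 1), (- 1, 0, 0)) = ((- 1, 1, 1), (0, 1, 0))"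
  "F3 ((- 1, - 1, 1), (0, - 1, 0)) = ((- 1, 1, 1), (- 1, 0, 0))"
  "F3 ((- 1, - 1, 1), (0, 0, 1)) = ((- 1, 1, 1), (0, 0, 1))"
  "F3 ((- 1, 1, - 1), (- 1, 0, 0)) = ((- 1, 1, - 1), (- 1, 0, 0))"
  "F3 ((- 1, 1, - 1), (0, 1, 0)) = ((- 1, 1, - 1), (0, 1, 0))"
  "F3 ((- 1, 1, - 1), (0, 0, - 1)) = ((- 1, 1, - 1), (0, 0, - 1))"
  "F3 ((- 1, 1, 1), (- 1, 0, 0)) = ((1, 1, 1), (0, 1, 0))"
  "F3 ((- 1, 1, 1), (0, 1, 0)) = ((1, 1, 1), (1, 0, 0))"
  "F3 ((- 1, 1, 1), (0, 0, 1)) = ((1, 1, 1), (0, 0, 1))"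
  "F3 ((1, - 1, - 1), (1, 0, 0)) = ((1, - 1, - 1), (1, 0, 0))"
  "F3 ((1, - 1, - 1), (0, - 1, 0)) = ((1, - 1, - 1), (0, - 1, 0))"
  "F3 ((1, - 1, - 1), (0, 0, - 1)) = ((1, - 1, - 1), (0, 0, - 1))"
  "F3 ((1, - 1, 1), (1, 0, 0)) = ((- 1, - 1, 1), (0, - 1, 0))"
  "F3 ((1, - 1, 1), (0, - 1, 0)) = ((- 1, - 1, 1), (- 1, 0, 0))"
  "F3 ((1, - 1, 1), (0, 0, 1)) = ((- 1, - 1, 1), (0, 0, 1))"
  "F3 ((1, 1, - 1), (1, 0, 0)) = ((1, 1, - 1), (1, 0, 0))"
  "F3 ((1, 1, - 1), (0, 1, 0)) = ((1, 1, - 1), (0, 1, 0))"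
  "F3 ((1, 1, - 1), (0, 0, - 1)) = ((1, 1, - 1), (0, 0, - 1))"
  "F3 ((1, 1, 1), (1, 0, 0)) = ((1, - 1, 1), (0, - 1, 0))"
  "F3 ((1, 1, 1), (0, 1, 0)) = ((1, - 1, 1), (1, 0, 0))"
  "F3 ((1, 1, 1), (0, 0, 1)) = ((1, - 1, 1), (0, 0, 1))"
  "F3 ((- 1, - 1, 0), (- 1, 0, 0)) = ((- 1, - 1, 0), (- 1, 0, 0))"
  "F3 ((- 1, - 1, 0), (0, - 1, 0)) = ((- 1, - 1, 0), (0, - 1, 0))"
  "F3 ((- 1, 0, - 1), (- 1, 0, 0)) = ((- 1, 0, - 1), (- 1, 0, 0))"
  "F3 ((- 1, 0, - 1), (0, 0, - 1)) = ((- 1, 0, - 1), (0, 0, - 1))"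
  "F3 ((- 1, 0, 1), (- 1, 0, 0)) = ((0, 1, 1), (0, 1, 0))"
  "F3 ((- 1, 0, 1), (0, 0, 1)) = ((0, 1, 1), (0, 0, 1))"
  "F3 ((- 1, 1, 0), (- 1, 0, 0)) = ((- 1, 1, 0), (- 1, 0, 0))"
  "F3 ((- 1, 1, 0), (0, 1, 0)) = ((- 1, 1, 0), (0, 1, 0))"
  "F3 ((0, - 1, - 1), (0, - 1, 0)) = ((0, - 1, - 1), (0, - 1, 0))"
  "F3 ((0, - 1, - 1), (0, 0, - 1)) = ((0, - 1, - 1), (0, 0, - 1))"
  "F3 ((0, - 1, 1), (0, - 1, 0)) = ((- 1, 0, 1), (- 1, 0, 0))"
  "F3 ((0, - 1, 1), (0, 0, 1)) = ((- 1, 0, 1), (0, 0, 1))"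
  "F3 ((0, 1, - 1), (0, 1, 0)) = ((0, 1, - 1), (0, 1, 0))"
  "F3 ((0, 1, - 1), (0, 0, - 1)) = ((0, 1, - 1), (0, 0, - 1))"
  "F3 ((0, 1, 1), (0, 1, 0)) = ((1, 0, 1), (1, 0, 0))"
  "F3 ((0, 1, 1), (0, 0, 1)) = ((1, 0, 1), (0, 0, 1))"
  "F3 ((1, - 1, 0), (1, 0, 0)) = ((1, - 1, 0), (1, 0, 0))"
  "F3 ((1, - 1, 0), (0, - 1, 0)) = ((1, - 1, 0), (0, - 1, 0))"
  "F3 ((1, 0, - 1), (1, 0, 0)) = ((1, 0, - 1), (1, 0, 0))"
  "F3 ((1, 0, - 1), (0, 0, - 1)) = ((1, 0, - 1), (0, 0, - 1))"
  "F3 ((1, 0, 1), (1, 0, 0)) = ((0, - 1, 1), (0, - 1, 0))"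
  "F3 ((1, 0, 1), (0, 0, 1)) = ((0, - 1, 1), (0, 0, 1))"
  "F3 ((1, 1, 0), (1, 0, 0)) = ((1, 1, 0), (1, 0, 0))"
  "F3 ((1, 1, 0), (0, 1, 0)) = ((1, 1, 0), (0, 1, 0))"
  by (simp_all add: F3_def layer_move_def S3_eq CS_eq ES_eq rot_f_def)
lemma F3i_tab[simp]:
  "F3i ((- 1, - 1, - 1), (- 1, 0, 0)) = ((- 1, - 1, - 1), (- 1, 0, 0))"
  "F3i ((- 1, - 1, - 1), (0, - 1, 0)) = ((- 1, - 1, - 1), (0, - 1, 0))"
  "F3i ((- 1, - 1, - 1), (0, 0, - 1)) = ((- 1, - 1, - 1), (0, 0, - 1))"
  "F3i ((- 1, - 1, 1), (- 1, 0, 0)) = ((1, - 1, 1), (0, - 1, 0))"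
  "F3i ((- 1, - 1, 1), (0, - 1, 0)) = ((1, - 1, 1), (1, 0, 0))"
  "F3i ((- 1, - 1, 1), (0, 0, 1)) = ((1, - 1, 1), (0, 0, 1))"
  "F3i ((- 1, 1, - 1), (- 1, 0, 0)) = ((- 1, 1, - 1), (- 1, 0, 0))"
  "F3i ((- 1, 1, - 1), (0, 1, 0)) = ((- 1, 1, - 1), (0, 1, 0))"
  "F3i ((- 1, 1, - 1), (0, 0, - 1)) = ((- 1, 1, - 1), (0, 0, - 1))"
  "F3i ((- 1, 1, 1), (- 1, 0, 0)) = ((- 1, - 1, 1), (0, - 1, 0))"
  "F3i ((- 1, 1, 1), (0, 1, 0)) = ((- 1, - 1, 1), (- 1, 0, 0))"
  "F3i ((- 1, 1, 1), (0, 0, 1)) = ((- 1, - 1, 1), (0, 0, 1))"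
  "F3i ((1, - 1, - 1), (1, 0, 0)) = ((1, - 1, - 1), (1, 0, 0))"
  "F3i ((1, - 1, - 1), (0, - 1, 0)) = ((1, - 1, - 1), (0, - 1, 0))"
  "F3i ((1, - 1, - 1), (0, 0, - 1)) = ((1, - 1, - 1), (0, 0, - 1))"
  "F3i ((1, - 1, 1), (1, 0, 0)) = ((1, 1, 1), (0, 1, 0))"
  "F3i ((1, - 1, 1), (0, - 1, 0)) = ((1, 1, 1), (1, 0, 0))"
  "F3i ((1, - 1, 1), (0, 0, 1)) = ((1, 1, 1), (0, 0, 1))"
  "F3i ((1, 1, - 1), (1, 0, 0)) = ((1, 1, - 1), (1, 0, 0))"
  "F3i ((1, 1, - 1), (0, 1, 0)) = ((1, 1, - 1), (0, 1, 0))"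
  "F3i ((1, 1, - 1), (0, 0, - 1)) = ((1, 1, - 1), (0, 0, - 1))"
  "F3i ((1, 1, 1), (1, 0, 0)) = ((- 1, 1, 1), (0, 1, 0))"
  "F3i ((1, 1, 1), (0, 1, 0)) = ((- 1, 1, 1), (- 1, 0, 0))"
  "F3i ((1, 1, 1), (0, 0, 1)) = ((- 1, 1, 1), (0, 0, 1))"
  "F3i ((- 1, - 1, 0), (- 1, 0, 0)) = ((- 1, - 1, 0), (- 1, 0, 0))"
  "F3i ((- 1, - 1, 0), (0, - 1, 0)) = ((- 1, - 1, 0), (0, - 1, 0))"
  "F3i ((- 1, 0, - 1), (- 1, 0, 0)) = ((- 1, 0, - 1), (- 1, 0, 0))"
  "F3i ((- 1, 0, - 1), (0, 0, - 1)) = ((- 1, 0, - 1), (0, 0, - 1))"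
  "F3i ((- 1, 0, 1), (- 1, 0, 0)) = ((0, - 1, 1), (0, - 1, 0))"
  "F3i ((- 1, 0, 1), (0, 0, 1)) = ((0, - 1, 1), (0, 0, 1))"
  "F3i ((- 1, 1, 0), (- 1, 0, 0)) = ((- 1, 1, 0), (- 1, 0, 0))"
  "F3i ((- 1, 1, 0), (0, 1, 0)) = ((- 1, 1, 0), (0, 1, 0))"
  "F3i ((0, - 1, - 1), (0, - 1, 0)) = ((0, - 1, - 1), (0, - 1, 0))"
  "F3i ((0, - 1, - 1), (0, 0, - 1)) = ((0, - 1, - 1), (0, 0, - 1))"
  "F3i ((0, - 1, 1), (0, - 1, 0)) = ((1, 0, 1), (1, 0, 0))"
  "F3i ((0, - 1, 1), (0, 0, 1)) = ((1, 0, 1), (0, 0, 1))"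
  "F3i ((0, 1, - 1), (0, 1, 0)) = ((0, 1, - 1), (0, 1, 0))"
  "F3i ((0, 1, - 1), (0, 0, - 1)) = ((0, 1, - 1), (0, 0, - 1))"
  "F3i ((0, 1, 1), (0, 1, 0)) = ((- 1, 0, 1), (- 1, 0, 0))"
  "F3i ((0, 1, 1), (0, 0, 1)) = ((- 1, 0, 1), (0, 0, 1))"
  "F3i ((1, - 1, 0), (1, 0, 0)) = ((1, - 1, 0), (1, 0, 0))"
  "F3i ((1, - 1, 0), (0, - 1, 0)) = ((1, - 1, 0), (0, - 1, 0))"
  "F3i ((1, 0, - 1), (1, 0, 0)) = ((1, 0, - 1), (1, 0, 0))"
  "F3i ((1, 0, - 1), (0, 0, - 1)) = ((1, 0, - 1), (0, 0, - 1))"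
  "F3i ((1, 0, 1), (1, 0, 0)) = ((0, 1, 1), (0, 1, 0))"
  "F3i ((1, 0, 1), (0, 0, 1)) = ((0, 1, 1), (0, 0, 1))"
  "F3i ((1, 1, 0), (1, 0, 0)) = ((1, 1, 0), (1, 0, 0))"
  "F3i ((1, 1, 0), (0, 1, 0)) = ((1, 1, 0), (0, 1, 0))"
  by (simp_all add: F3i_def)
lemma B3_tab[simp]:
  "B3 ((- 1, - 1, - 1), (- 1, 0, 0)) = ((1, - 1, - 1), (0, - 1, 0))"
  "B3 ((- 1, - 1, - 1), (0, - 1, 0)) = ((1, - 1, - 1), (1, 0, 0))"
  "B3 ((- 1, - 1, - 1), (0, 0, - 1)) = ((1, - 1, - 1), (0, 0, - 1))"
  "B3 ((- 1, - 1, 1), (- 1, 0, 0)) = ((- 1, - 1, 1), (- 1, 0, 0))"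
  "B3 ((- 1, - 1, 1), (0, - 1, 0)) = ((- 1, - 1, 1), (0, - 1, 0))"
  "B3 ((- 1, - 1, 1), (0, 0, 1)) = ((- 1, - 1, 1), (0, 0, 1))"
  "B3 ((- 1, 1, - 1), (- 1, 0, 0)) = ((- 1, - 1, - 1), (0, - 1, 0))"
  "B3 ((- 1, 1, - 1), (0, 1, 0)) = ((- 1, - 1, - 1), (- 1, 0, 0))"
  "B3 ((- 1, 1, - 1), (0, 0, - 1)) = ((- 1, - 1, - 1), (0, 0, - 1))"
  "B3 ((- 1, 1, 1), (- 1, 0, 0)) = ((- 1, 1, 1), (- 1, 0, 0))"
  "B3 ((- 1, 1, 1), (0, 1, 0)) = ((- 1, 1, 1), (0, 1, 0))"
  "B3 ((- 1, 1, 1), (0, 0, 1)) = ((- 1, 1, 1), (0, 0, 1))"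
  "B3 ((1, - 1, - 1), (1, 0, 0)) = ((1, 1, - 1), (0, 1, 0))"
  "B3 ((1, - 1, - 1), (0, - 1, 0)) = ((1, 1, - 1), (1, 0, 0))"
  "B3 ((1, - 1, - 1), (0, 0, - 1)) = ((1, 1, - 1), (0, 0, - 1))"
  "B3 ((1, - 1, 1), (1, 0, 0)) = ((1, - 1, 1), (1, 0, 0))"
  "B3 ((1, - 1, 1), (0, - 1, 0)) = ((1, - 1, 1), (0, - 1, 0))"
  "B3 ((1, - 1, 1), (0, 0, 1)) = ((1, - 1, 1), (0, 0, 1))"
  "B3 ((1, 1, - 1), (1, 0, 0)) = ((- 1, 1, - 1), (0, 1, 0))"
  "B3 ((1, 1, - 1), (0, 1, 0)) = ((- 1, 1, - 1), (- 1, 0, 0))"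
  "B3 ((1, 1, - 1), (0, 0, - 1)) = ((- 1, 1, - 1), (0, 0, - 1))"
  "B3 ((1, 1, 1), (1, 0, 0)) = ((1, 1, 1), (1, 0, 0))"
  "B3 ((1, 1, 1), (0, 1, 0)) = ((1, 1, 1), (0, 1, 0))"
  "B3 ((1, 1, 1), (0, 0, 1)) = ((1, 1, 1), (0, 0, 1))"
  "B3 ((- 1, - 1, 0), (- 1, 0, 0)) = ((- 1, - 1, 0), (- 1, 0, 0))"
  "B3 ((- 1, - 1, 0), (0, - 1, 0)) = ((- 1, - 1, 0), (0, - 1, 0))"
  "B3 ((- 1, 0, - 1), (- 1, 0, 0)) = ((0, - 1, - 1), (0, - 1, 0))"
  "B3 ((- 1, 0, - 1), (0, 0, - 1)) = ((0, - 1, - 1), (0, 0, - 1))"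
  "B3 ((- 1, 0, 1), (- 1, 0, 0)) = ((- 1, 0, 1), (- 1, 0, 0))"
  "B3 ((- 1, 0, 1), (0, 0, 1)) = ((- 1, 0, 1), (0, 0, 1))"
  "B3 ((- 1, 1, 0), (- 1, 0, 0)) = ((- 1, 1, 0), (- 1, 0, 0))"
  "B3 ((- 1, 1, 0), (0, 1, 0)) = ((- 1, 1, 0), (0, 1, 0))"
  "B3 ((0, - 1, - 1), (0, - 1, 0)) = ((1, 0, - 1), (1, 0, 0))"
  "B3 ((0, - 1, - 1), (0, 0, - 1)) = ((1, 0, - 1), (0, 0, - 1))"
  "B3 ((0, - 1, 1), (0, - 1, 0)) = ((0, - 1, 1), (0, - 1, 0))"
  "B3 ((0, - 1, 1), (0, 0, 1)) = ((0, - 1, 1), (0, 0, 1))"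
  "B3 ((0, 1, - 1), (0, 1, 0)) = ((- 1, 0, - 1), (- 1, 0, 0))"
  "B3 ((0, 1, - 1), (0, 0, - 1)) = ((- 1, 0, - 1), (0, 0, - 1))"
  "B3 ((0, 1, 1), (0, 1, 0)) = ((0, 1, 1), (0, 1, 0))"
  "B3 ((0, 1, 1), (0, 0, 1)) = ((0, 1, 1), (0, 0, 1))"
  "B3 ((1, - 1, 0), (1, 0, 0)) = ((1, - 1, 0), (1, 0, 0))"
  "B3 ((1, - 1, 0), (0, - 1, 0)) = ((1, - 1, 0), (0, - 1, 0))"
  "B3 ((1, 0, - 1), (1, 0, 0)) = ((0, 1, - 1), (0, 1, 0))"
  "B3 ((1, 0, - 1), (0, 0, - 1)) = ((0, 1, - 1), (0, 0, - 1))"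
  "B3 ((1, 0, 1), (1, 0, 0)) = ((1, 0, 1), (1, 0, 0))"
  "B3 ((1, 0, 1), (0, 0, 1)) = ((1, 0, 1), (0, 0, 1))"
  "B3 ((1, 1, 0), (1, 0, 0)) = ((1, 1, 0), (1, 0, 0))"
  "B3 ((1, 1, 0), (0, 1, 0)) = ((1, 1, 0), (0, 1, 0))"
  by (simp_all add: B3_def layer_move_def S3_eq CS_eq ES_eq rot_b_def)
lemma B3i_tab[simp]:
  "B3i ((- 1, - 1, - 1), (- 1, 0, 0)) = ((- 1, 1, - 1), (0, 1, 0))"
  "B3i ((- 1, - 1, - 1), (0, - 1, 0)) = ((- 1, 1, - 1), (- 1, 0, 0))"
  "B3i ((- 1, - 1, - 1), (0, 0, - 1)) = ((- 1, 1, - 1), (0, 0, - 1))"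
  "B3i ((- 1, - 1, 1), (- 1, 0, 0)) = ((- 1, - 1, 1), (- 1, 0, 0))"
  "B3i ((- 1, - 1, 1), (0, - 1, 0)) = ((- 1, - 1, 1), (0, - 1, 0))"
  "B3i ((- 1, - 1, 1), (0, 0, 1)) = ((- 1, - 1, 1), (0, 0, 1))"
  "B3i ((- 1, 1, - 1), (- 1, 0, 0)) = ((1, 1, - 1), (0, 1, 0))"
  "B3i ((- 1, 1, - 1), (0, 1, 0)) = ((1, 1, - 1), (1, 0, 0))"
  "B3i ((- 1, 1, - 1), (0, 0, - 1)) = ((1, 1, - 1), (0, 0, - 1))"
  "B3i ((- 1, 1, 1), (- 1, 0, 0)) = ((- 1, 1, 1), (- 1, 0, 0))"
  "B3i ((- 1, 1, 1), (0, 1, 0)) = ((- 1, 1, 1), (0, 1, 0))"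
  "B3i ((- 1, 1, 1), (0, 0, 1)) = ((- 1, 1, 1), (0, 0, 1))"
  "B3i ((1, - 1, - 1), (1, 0, 0)) = ((- 1, - 1, - 1), (0, - 1, 0))"
  "B3i ((1, - 1, - 1), (0, - 1, 0)) = ((- 1, - 1, - 1), (- 1, 0, 0))"
  "B3i ((1, - 1, - 1), (0, 0, - 1)) = ((- 1, - 1, - 1), (0, 0, - 1))"
  "B3i ((1, - 1, 1), (1, 0, 0)) = ((1, - 1, 1), (1, 0, 0))"
  "B3i ((1, - 1, 1), (0, - 1, 0)) = ((1, - 1, 1), (0, - 1, 0))"
  "B3i ((1, - 1, 1), (0, 0, 1)) = ((1, - 1, 1), (0, 0, 1))"
  "B3i ((1, 1, - 1), (1, 0, 0)) = ((1, - 1, - 1), (0, - 1, 0))"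
  "B3i ((1, 1, - 1), (0, 1, 0)) = ((1, - 1, - 1), (1, 0, 0))"
  "B3i ((1, 1, - 1), (0, 0, - 1)) = ((1, - 1, - 1), (0, 0, - 1))"
  "B3i ((1, 1, 1), (1, 0, 0)) = ((1, 1, 1), (1, 0, 0))"
  "B3i ((1, 1, 1), (0, 1, 0)) = ((1, 1, 1), (0, 1, 0))"
  "B3i ((1, 1, 1), (0, 0, 1)) = ((1, 1, 1), (0, 0, 1))"
  "B3i ((- 1, - 1, 0), (- 1, 0, 0)) = ((- 1, - 1, 0), (- 1, 0, 0))"
  "B3i ((- 1, - 1, 0), (0, - 1, 0)) = ((- 1, - 1, 0), (0, - 1, 0))"
  "B3i ((- 1, 0, - 1), (- 1, 0, 0)) = ((0, 1, - 1), (0, 1, 0))"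
  "B3i ((- 1, 0, - 1), (0, 0, - 1)) = ((0, 1, - 1), (0, 0, - 1))"
  "B3i ((- 1, 0, 1), (- 1, 0, 0)) = ((- 1, 0, 1), (- 1, 0, 0))"
  "B3i ((- 1, 0, 1), (0, 0, 1)) = ((- 1, 0, 1), (0, 0, 1))"
  "B3i ((- 1, 1, 0), (- 1, 0, 0)) = ((- 1, 1, 0), (- 1, 0, 0))"
  "B3i ((- 1, 1, 0), (0, 1, 0)) = ((- 1, 1, 0), (0, 1, 0))"
  "B3i ((0, - 1, - 1), (0, - 1, 0)) = ((- 1, 0, - 1), (- 1, 0, 0))"
  "B3i ((0, - 1, - 1), (0, 0, - 1)) = ((- 1, 0, - 1), (0, 0, - 1))"
  "B3i ((0, - 1, 1), (0, - 1, 0)) = ((0, - 1, 1), (0, - 1, 0))"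
  "B3i ((0, - 1, 1), (0, 0, 1)) = ((0, - 1, 1), (0, 0, 1))"
  "B3i ((0, 1, - 1), (0, 1, 0)) = ((1, 0, - 1), (1, 0, 0))"
  "B3i ((0, 1, - 1), (0, 0, - 1)) = ((1, 0, - 1), (0, 0, - 1))"
  "B3i ((0, 1, 1), (0, 1, 0)) = ((0, 1, 1), (0, 1, 0))"
  "B3i ((0, 1, 1), (0, 0, 1)) = ((0, 1, 1), (0, 0, 1))"
  "B3i ((1, - 1, 0), (1, 0, 0)) = ((1, - 1, 0), (1, 0, 0))"
  "B3i ((1, - 1, 0), (0, - 1, 0)) = ((1, - 1, 0), (0, - 1, 0))"
  "B3i ((1, 0, - 1), (1, 0, 0)) = ((0, - 1, - 1), (0, - 1, 0))"
  "B3i ((1, 0, - 1), (0, 0, - 1)) = ((0, - 1, - 1), (0, 0, - 1))"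
  "B3i ((1, 0, 1), (1, 0, 0)) = ((1, 0, 1), (1, 0, 0))"
  "B3i ((1, 0, 1), (0, 0, 1)) = ((1, 0, 1), (0, 0, 1))"
  "B3i ((1, 1, 0), (1, 0, 0)) = ((1, 1, 0), (1, 0, 0))"
  "B3i ((1, 1, 0), (0, 1, 0)) = ((1, 1, 0), (0, 1, 0))"
  by (simp_all add: B3i_def)
lemma L3_tab[simp]:
  "L3 ((- 1, - 1, - 1), (- 1, 0, 0)) = ((- 1, 1, - 1), (- 1, 0, 0))"
  "L3 ((- 1, - 1, - 1), (0, - 1, 0)) = ((- 1, 1, - 1), (0, 0, - 1))"
  "L3 ((- 1, - 1, - 1), (0, 0, - 1)) = ((- 1, 1, - 1), (0, 1, 0))"
  "L3 ((- 1, - 1, 1), (- 1, 0, 0)) = ((- 1, - 1, - 1), (- 1, 0, 0))"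
  "L3 ((- 1, - 1, 1), (0, - 1, 0)) = ((- 1, - 1, - 1), (0, 0, - 1))"
  "L3 ((- 1, - 1, 1), (0, 0, 1)) = ((- 1, - 1, - 1), (0, - 1, 0))"
  "L3 ((- 1, 1, - 1), (- 1, 0, 0)) = ((- 1, 1, 1), (- 1, 0, 0))"
  "L3 ((- 1, 1, - 1), (0, 1, 0)) = ((- 1, 1, 1), (0, 0, 1))"
  "L3 ((- 1, 1, - 1), (0, 0, - 1)) = ((- 1, 1, 1), (0, 1, 0))"
  "L3 ((- 1, 1, 1), (- 1, 0, 0)) = ((- 1, - 1, 1), (- 1, 0, 0))"
  "L3 ((- 1, 1, 1), (0, 1, 0)) = ((- 1, - 1, 1), (0, 0, 1))"
  "L3 ((- 1, 1, 1), (0, 0, 1)) = ((- 1, - 1, 1), (0, - 1, 0))"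
  "L3 ((1, - 1, - 1), (1, 0, 0)) = ((1, - 1, - 1), (1, 0, 0))"
  "L3 ((1, - 1, - 1), (0, - 1, 0)) = ((1, - 1, - 1), (0, - 1, 0))"
  "L3 ((1, - 1, - 1), (0, 0, - 1)) = ((1, - 1, - 1), (0, 0, - 1))"
  "L3 ((1, - 1, 1), (1, 0, 0)) = ((1, - 1, 1), (1, 0, 0))"
  "L3 ((1, - 1, 1), (0, - 1, 0)) = ((1, - 1, 1), (0, - 1, 0))"
  "L3 ((1, - 1, 1), (0, 0, 1)) = ((1, - 1, 1), (0, 0, 1))"
  "L3 ((1, 1, - 1), (1, 0, 0)) = ((1, 1, - 1), (1, 0, 0))"
  "L3 ((1, 1, - 1), (0, 1, 0)) = ((1, 1, - 1), (0, 1, 0))"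
  "L3 ((1, 1, - 1), (0, 0, - 1)) = ((1, 1, - 1), (0, 0, - 1))"
  "L3 ((1, 1, 1), (1, 0, 0)) = ((1, 1, 1), (1, 0, 0))"
  "L3 ((1, 1, 1), (0, 1, 0)) = ((1, 1, 1), (0, 1, 0))"
  "L3 ((1, 1, 1), (0, 0, 1)) = ((1, 1, 1), (0, 0, 1))"
  "L3 ((- 1, - 1, 0), (- 1, 0, 0)) = ((- 1, 0, - 1), (- 1, 0, 0))"
  "L3 ((- 1, - 1, 0), (0, - 1, 0)) = ((- 1, 0, - 1), (0, 0, - 1))"
  "L3 ((- 1, 0, - 1), (- 1, 0, 0)) = ((- 1, 1, 0), (- 1, 0, 0))"
  "L3 ((- 1, 0, - 1), (0, 0, - 1)) = ((- 1, 1, 0), (0, 1, 0))"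
  "L3 ((- 1, 0, 1), (- 1, 0, 0)) = ((- 1, - 1, 0), (- 1, 0, 0))"
  "L3 ((- 1, 0, 1), (0, 0, 1)) = ((- 1, - 1, 0), (0, - 1, 0))"
  "L3 ((- 1, 1, 0), (- 1, 0, 0)) = ((- 1, 0, 1), (- 1, 0, 0))"
  "L3 ((- 1, 1, 0), (0, 1, 0)) = ((- 1, 0, 1), (0, 0, 1))"
  "L3 ((0, - 1, - 1), (0, - 1, 0)) = ((0, - 1, - 1), (0, - 1, 0))"
  "L3 ((0, - 1, - 1), (0, 0, - 1)) = ((0, - 1, - 1), (0, 0, - 1))"
  "L3 ((0, - 1, 1), (0, - 1, 0)) = ((0, - 1, 1), (0, - 1, 0))"
  "L3 ((0, - 1, 1), (0, 0, 1)) = ((0, - 1, 1), (0, 0, 1))"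
  "L3 ((0, 1, - 1), (0, 1, 0)) = ((0, 1, - 1), (0, 1, 0))"
  "L3 ((0, 1, - 1), (0, 0, - 1)) = ((0, 1, - 1), (0, 0, - 1))"
  "L3 ((0, 1, 1), (0, 1, 0)) = ((0, 1, 1), (0, 1, 0))"
  "L3 ((0, 1, 1), (0, 0, 1)) = ((0, 1, 1), (0, 0, 1))"
  "L3 ((1, - 1, 0), (1, 0, 0)) = ((1, - 1, 0), (1, 0, 0))"
  "L3 ((1, - 1, 0), (0, - 1, 0)) = ((1, - 1, 0), (0, - 1, 0))"
  "L3 ((1, 0, - 1), (1, 0, 0)) = ((1, 0, - 1), (1, 0, 0))"
  "L3 ((1, 0, - 1), (0, 0, - 1)) = ((1, 0, - 1), (0, 0, - 1))"
  "L3 ((1, 0, 1), (1, 0, 0)) = ((1, 0, 1), (1, 0, 0))"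
  "L3 ((1, 0, 1), (0, 0, 1)) = ((1, 0, 1), (0, 0, 1))"
  "L3 ((1, 1, 0), (1, 0, 0)) = ((1, 1, 0), (1, 0, 0))"
  "L3 ((1, 1, 0), (0, 1, 0)) = ((1, 1, 0), (0, 1, 0))"
  by (simp_all add: L3_def layer_move_def S3_eq CS_eq ES_eq rot_l_def)
lemma L3i_tab[simp]:
  "L3i ((- 1, - 1, - 1), (- 1, 0, 0)) = ((- 1, - 1, 1), (- 1, 0, 0))"
  "L3i ((- 1, - 1, - 1), (0, - 1, 0)) = ((- 1, - 1, 1), (0, 0, 1))"
  "L3i ((- 1, - 1, - 1), (0, 0, - 1)) = ((- 1, - 1, 1), (0, - 1, 0))"
  "L3i ((- 1, - 1, 1), (- 1, 0, 0)) = ((- 1, 1, 1), (- 1, 0, 0))"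
  "L3i ((- 1, - 1, 1), (0, - 1, 0)) = ((- 1, 1, 1), (0, 0, 1))"
  "L3i ((- 1, - 1, 1), (0, 0, 1)) = ((- 1, 1, 1), (0, 1, 0))"
  "L3i ((- 1, 1, - 1), (- 1, 0, 0)) = ((- 1, - 1, - 1), (- 1, 0, 0))"
  "L3i ((- 1, 1, - 1), (0, 1, 0)) = ((- 1, - 1, - 1), (0, 0, - 1))"
  "L3i ((- 1, 1, - 1), (0, 0, - 1)) = ((- 1, - 1, - 1), (0, - 1, 0))"
  "L3i ((- 1, 1, 1), (- 1, 0, 0)) = ((- 1, 1, - 1), (- 1, 0, 0))"
  "L3i ((- 1, 1, 1), (0, 1, 0)) = ((- 1, 1, - 1), (0, 0, - 1))"
  "L3i ((- 1, 1, 1), (0, 0, 1)) = ((- 1, 1, - 1), (0, 1, 0))"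
  "L3i ((1, - 1, - 1), (1, 0, 0)) = ((1, - 1, - 1), (1, 0, 0))"
  "L3i ((1, - 1, - 1), (0, - 1, 0)) = ((1, - 1, - 1), (0, - 1, 0))"
  "L3i ((1, - 1, - 1), (0, 0, - 1)) = ((1, - 1, - 1), (0, 0, - 1))"
  "L3i ((1, - 1, 1), (1, 0, 0)) = ((1, - 1, 1), (1, 0, 0))"
  "L3i ((1, - 1, 1), (0, - 1, 0)) = ((1, - 1, 1), (0, - 1, 0))"
  "L3i ((1, - 1, 1), (0, 0, 1)) = ((1, - 1, 1), (0, 0, 1))"
  "L3i ((1, 1, - 1), (1, 0, 0)) = ((1, 1, - 1), (1, 0, 0))"
  "L3i ((1, 1, - 1), (0, 1, 0)) = ((1, 1, - 1), (0, 1, 0))"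
  "L3i ((1, 1, - 1), (0, 0, - 1)) = ((1, 1, - 1), (0, 0, - 1))"
  "L3i ((1, 1, 1), (1, 0, 0)) = ((1, 1, 1), (1, 0, 0))"
  "L3i ((1, 1, 1), (0, 1, 0)) = ((1, 1, 1), (0, 1, 0))"
  "L3i ((1, 1, 1), (0, 0, 1)) = ((1, 1, 1), (0, 0, 1))"
  "L3i ((- 1, - 1, 0), (- 1, 0, 0)) = ((- 1, 0, 1), (- 1, 0, 0))"
  "L3i ((- 1, - 1, 0), (0, - 1, 0)) = ((- 1, 0, 1), (0, 0, 1))"
  "L3i ((- 1, 0, - 1), (- 1, 0, 0)) = ((- 1, - 1, 0), (- 1, 0, 0))"
  "L3i ((- 1, 0, - 1), (0, 0, - 1)) = ((- 1, - 1, 0), (0, - 1, 0))"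
  "L3i ((- 1, 0, 1), (- 1, 0, 0)) = ((- 1, 1, 0), (- 1, 0, 0))"
  "L3i ((- 1, 0, 1), (0, 0, 1)) = ((- 1, 1, 0), (0, 1, 0))"
  "L3i ((- 1, 1, 0), (- 1, 0, 0)) = ((- 1, 0, - 1), (- 1, 0, 0))"
  "L3i ((- 1, 1, 0), (0, 1, 0)) = ((- 1, 0, - 1), (0, 0, - 1))"
  "L3i ((0, - 1, - 1), (0, - 1, 0)) = ((0, - 1, - 1), (0, - 1, 0))"
  "L3i ((0, - 1, - 1), (0, 0, - 1)) = ((0, - 1, - 1), (0, 0, - 1))"
  "L3i ((0, - 1, 1), (0, - 1, 0)) = ((0, - 1, 1), (0, - 1, 0))"
  "L3i ((0, - 1, 1), (0, 0, 1)) = ((0, - 1, 1), (0, 0, 1))"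
  "L3i ((0, 1, - 1), (0, 1, 0)) = ((0, 1, - 1), (0, 1, 0))"
  "L3i ((0, 1, - 1), (0, 0, - 1)) = ((0, 1, - 1), (0, 0, - 1))"
  "L3i ((0, 1, 1), (0, 1, 0)) = ((0, 1, 1), (0, 1, 0))"
  "L3i ((0, 1, 1), (0, 0, 1)) = ((0, 1, 1), (0, 0, 1))"
  "L3i ((1, - 1, 0), (1, 0, 0)) = ((1, - 1, 0), (1, 0, 0))"
  "L3i ((1, - 1, 0), (0, - 1, 0)) = ((1, - 1, 0), (0, - 1, 0))"
  "L3i ((1, 0, - 1), (1, 0, 0)) = ((1, 0, - 1), (1, 0, 0))"
  "L3i ((1, 0, - 1), (0, 0, - 1)) = ((1, 0, - 1), (0, 0, - 1))"
  "L3i ((1, 0, 1), (1, 0, 0)) = ((1, 0, 1), (1, 0, 0))"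
  "L3i ((1, 0, 1), (0, 0, 1)) = ((1, 0, 1), (0, 0, 1))"
  "L3i ((1, 1, 0), (1, 0, 0)) = ((1, 1, 0), (1, 0, 0))"
  "L3i ((1, 1, 0), (0, 1, 0)) = ((1, 1, 0), (0, 1, 0))"
  by (simp_all add: L3i_def)
lemma R3_tab[simp]:
  "R3 ((- 1, - 1, - 1), (- 1, 0, 0)) = ((- 1, - 1, - 1), (- 1, 0, 0))"
  "R3 ((- 1, - 1, - 1), (0, - 1, 0)) = ((- 1, - 1, - 1), (0, - 1, 0))"
  "R3 ((- 1, - 1, - 1), (0, 0, - 1)) = ((- 1, - 1, - 1), (0, 0, - 1))"
  "R3 ((- 1, - 1, 1), (- 1, 0, 0)) = ((- 1, - 1, 1), (- 1, 0, 0))"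
  "R3 ((- 1, - 1, 1), (0, - 1, 0)) = ((- 1, - 1, 1), (0, - 1, 0))"
  "R3 ((- 1, - 1, 1), (0, 0, 1)) = ((- 1, - 1, 1), (0, 0, 1))"
  "R3 ((- 1, 1, - 1), (- 1, 0, 0)) = ((- 1, 1, - 1), (- 1, 0, 0))"
  "R3 ((- 1, 1, - 1), (0, 1, 0)) = ((- 1, 1, - 1), (0, 1, 0))"
  "R3 ((- 1, 1, - 1), (0, 0, - 1)) = ((- 1, 1, - 1), (0, 0, - 1))"
  "R3 ((- 1, 1, 1), (- 1, 0, 0)) = ((- 1, 1, 1), (- 1, 0, 0))"
  "R3 ((- 1, 1, 1), (0, 1, 0)) = ((- 1, 1, 1), (0, 1, 0))"
  "R3 ((- 1, 1, 1), (0, 0, 1)) = ((- 1, 1, 1), (0, 0, 1))"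
  "R3 ((1, - 1, - 1), (1, 0, 0)) = ((1, - 1, 1), (1, 0, 0))"
  "R3 ((1, - 1, - 1), (0, - 1, 0)) = ((1, - 1, 1), (0, 0, 1))"
  "R3 ((1, - 1, - 1), (0, 0, - 1)) = ((1, - 1, 1), (0, - 1, 0))"
  "R3 ((1, - 1, 1), (1, 0, 0)) = ((1, 1, 1), (1, 0, 0))"
  "R3 ((1, - 1, 1), (0, - 1, 0)) = ((1, 1, 1), (0, 0, 1))"
  "R3 ((1, - 1, 1), (0, 0, 1)) = ((1, 1, 1), (0, 1, 0))"
  "R3 ((1, 1, - 1), (1, 0, 0)) = ((1, - 1, - 1), (1, 0, 0))"
  "R3 ((1, 1, - 1), (0, 1, 0)) = ((1, - 1, - 1), (0, 0, - 1))"
  "R3 ((1, 1, - 1), (0, 0, - 1)) = ((1, - 1, - 1), (0, - 1, 0))"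
  "R3 ((1, 1, 1), (1, 0, 0)) = ((1, 1, - 1), (1, 0, 0))"
  "R3 ((1, 1, 1), (0, 1, 0)) = ((1, 1, - 1), (0, 0, - 1))"
  "R3 ((1, 1, 1), (0, 0, 1)) = ((1, 1, - 1), (0, 1, 0))"
  "R3 ((- 1, - 1, 0), (- 1, 0, 0)) = ((- 1, - 1, 0), (- 1, 0, 0))"
  "R3 ((- 1, - 1, 0), (0, - 1, 0)) = ((- 1, - 1, 0), (0, - 1, 0))"
  "R3 ((- 1, 0, - 1), (- 1, 0, 0)) = ((- 1, 0, - 1), (- 1, 0, 0))"
  "R3 ((- 1, 0, - 1), (0, 0, - 1)) = ((- 1, 0, - 1), (0, 0, - 1))"
  "R3 ((- 1, 0, 1), (- 1, 0, 0)) = ((- 1, 0, 1), (- 1, 0, 0))"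
  "R3 ((- 1, 0, 1), (0, 0, 1)) = ((- 1, 0, 1), (0, 0, 1))"
  "R3 ((- 1, 1, 0), (- 1, 0, 0)) = ((- 1, 1, 0), (- 1, 0, 0))"
  "R3 ((- 1, 1, 0), (0, 1, 0)) = ((- 1, 1, 0), (0, 1, 0))"
  "R3 ((0, - 1, - 1), (0, - 1, 0)) = ((0, - 1, - 1), (0, - 1, 0))"
  "R3 ((0, - 1, - 1), (0, 0, - 1)) = ((0, - 1, - 1), (0, 0, - 1))"
  "R3 ((0, - 1, 1), (0, - 1, 0)) = ((0, - 1, 1), (0, - 1, 0))"
  "R3 ((0, - 1, 1), (0, 0, 1)) = ((0, - 1, 1), (0, 0, 1))"
  "R3 ((0, 1, - 1), (0, 1, 0)) = ((0, 1, - 1), (0, 1, 0))"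
  "R3 ((0, 1, - 1), (0, 0, - 1)) = ((0, 1, - 1), (0, 0, - 1))"
  "R3 ((0, 1, 1), (0, 1, 0)) = ((0, 1, 1), (0, 1, 0))"
  "R3 ((0, 1, 1), (0, 0, 1)) = ((0, 1, 1), (0, 0, 1))"
  "R3 ((1, - 1, 0), (1, 0, 0)) = ((1, 0, 1), (1, 0, 0))"
  "R3 ((1, - 1, 0), (0, - 1, 0)) = ((1, 0, 1), (0, 0, 1))"
  "R3 ((1, 0, - 1), (1, 0, 0)) = ((1, - 1, 0), (1, 0, 0))"
  "R3 ((1, 0, - 1), (0, 0, - 1)) = ((1, - 1, 0), (0, - 1, 0))"
  "R3 ((1, 0, 1), (1, 0, 0)) = ((1, 1, 0), (1, 0, 0))"
  "R3 ((1, 0, 1), (0, 0, 1)) = ((1, 1, 0), (0, 1, 0))"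
  "R3 ((1, 1, 0), (1, 0, 0)) = ((1, 0, - 1), (1, 0, 0))"
  "R3 ((1, 1, 0), (0, 1, 0)) = ((1, 0, - 1), (0, 0, - 1))"
  by (simp_all add: R3_def layer_move_def S3_eq CS_eq ES_eq rot_r_def)
lemma R3i_tab[simp]:
  "R3i ((- 1, - 1, - 1), (- 1, 0, 0)) = ((- 1, - 1, - 1), (- 1, 0, 0))"
  "R3i ((- 1, - 1, - 1), (0, - 1, 0)) = ((- 1, - 1, - 1), (0, - 1, 0))"
  "R3i ((- 1, - 1, - 1), (0, 0, - 1)) = ((- 1, - 1, - 1), (0, 0, - 1))"
  "R3i ((- 1, - 1, 1), (- 1, 0, 0)) = ((- 1, - 1, 1), (- 1, 0, 0))"
  "R3i ((- 1, - 1, 1), (0, - 1, 0)) = ((- 1, - 1, 1), (0, - 1, 0))"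
  "R3i ((- 1, - 1, 1), (0, 0, 1)) = ((- 1, - 1, 1), (0, 0, 1))"
  "R3i ((- 1, 1, - 1), (- 1, 0, 0)) = ((- 1, 1, - 1), (- 1, 0, 0))"
  "R3i ((- 1, 1, - 1), (0, 1, 0)) = ((- 1, 1, - 1), (0, 1, 0))"
  "R3i ((- 1, 1, - 1), (0, 0, - 1)) = ((- 1, 1, - 1), (0, 0, - 1))"
  "R3i ((- 1, 1, 1), (- 1, 0, 0)) = ((- 1, 1, 1), (- 1, 0, 0))"
  "R3i ((- 1, 1, 1), (0, 1, 0)) = ((- 1, 1, 1), (0, 1, 0))"
  "R3i ((- 1, 1, 1), (0, 0, 1)) = ((- 1, 1, 1), (0, 0, 1))"
  "R3i ((1, - 1, - 1), (1, 0, 0)) = ((1, 1, - 1), (1, 0, 0))"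
  "R3i ((1, - 1, - 1), (0, - 1, 0)) = ((1, 1, - 1), (0, 0, - 1))"
  "R3i ((1, - 1, - 1), (0, 0, - 1)) = ((1, 1, - 1), (0, 1, 0))"
  "R3i ((1, - 1, 1), (1, 0, 0)) = ((1, - 1, - 1), (1, 0, 0))"
  "R3i ((1, - 1, 1), (0, - 1, 0)) = ((1, - 1, - 1), (0, 0, - 1))"
  "R3i ((1, - 1, 1), (0, 0, 1)) = ((1, - 1, - 1), (0, - 1, 0))"
  "R3i ((1, 1, - 1), (1, 0, 0)) = ((1, 1, 1), (1, 0, 0))"
  "R3i ((1, 1, - 1), (0, 1, 0)) = ((1, 1, 1), (0, 0, 1))"
  "R3i ((1, 1, - 1), (0, 0, - 1)) = ((1, 1, 1), (0, 1, 0))"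
  "R3i ((1, 1, 1), (1, 0, 0)) = ((1, - 1, 1), (1, 0, 0))"
  "R3i ((1, 1, 1), (0, 1, 0)) = ((1, - 1, 1), (0, 0, 1))"
  "R3i ((1, 1, 1), (0, 0, 1)) = ((1, - 1, 1), (0, - 1, 0))"
  "R3i ((- 1, - 1, 0), (- 1, 0, 0)) = ((- 1, - 1, 0), (- 1, 0, 0))"
  "R3i ((- 1, - 1, 0), (0, - 1, 0)) = ((- 1, - 1, 0), (0, - 1, 0))"
  "R3i ((- 1, 0, - 1), (- 1, 0, 0)) = ((- 1, 0, - 1), (- 1, 0, 0))"
  "R3i ((- 1, 0, - 1), (0, 0, - 1)) = ((- 1, 0, - 1), (0, 0, - 1))"
  "R3i ((- 1, 0, 1), (- 1, 0, 0)) = ((- 1, 0, 1), (- 1, 0, 0))"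
  "R3i ((- 1, 0, 1), (0, 0, 1)) = ((- 1, 0, 1), (0, 0, 1))"
  "R3i ((- 1, 1, 0), (- 1, 0, 0)) = ((- 1, 1, 0), (- 1, 0, 0))"
  "R3i ((- 1, 1, 0), (0, 1, 0)) = ((- 1, 1, 0), (0, 1, 0))"
  "R3i ((0, - 1, - 1), (0, - 1, 0)) = ((0, - 1, - 1), (0, - 1, 0))"
  "R3i ((0, - 1, - 1), (0, 0, - 1)) = ((0, - 1, - 1), (0, 0, - 1))"
  "R3i ((0, - 1, 1), (0, - 1, 0)) = ((0, - 1, 1), (0, - 1, 0))"
  "R3i ((0, - 1, 1), (0, 0, 1)) = ((0, - 1, 1), (0, 0, 1))"
  "R3i ((0, 1, - 1), (0, 1, 0)) = ((0, 1, - 1), (0, 1, 0))"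
  "R3i ((0, 1, - 1), (0, 0, - 1)) = ((0, 1, - 1), (0, 0, - 1))"
  "R3i ((0, 1, 1), (0, 1, 0)) = ((0, 1, 1), (0, 1, 0))"
  "R3i ((0, 1, 1), (0, 0, 1)) = ((0, 1, 1), (0, 0, 1))"
  "R3i ((1, - 1, 0), (1, 0, 0)) = ((1, 0, - 1), (1, 0, 0))"
  "R3i ((1, - 1, 0), (0, - 1, 0)) = ((1, 0, - 1), (0, 0, - 1))"
  "R3i ((1, 0, - 1), (1, 0, 0)) = ((1, 1, 0), (1, 0, 0))"
  "R3i ((1, 0, - 1), (0, 0, - 1)) = ((1, 1, 0), (0, 1, 0))"
  "R3i ((1, 0, 1), (1, 0, 0)) = ((1, - 1, 0), (1, 0, 0))"
  "R3i ((1, 0, 1), (0, 0, 1)) = ((1, - 1, 0), (0, - 1, 0))"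
  "R3i ((1, 1, 0), (1, 0, 0)) = ((1, 0, 1), (1, 0, 0))"
  "R3i ((1, 1, 0), (0, 1, 0)) = ((1, 0, 1), (0, 0, 1))"
  by (simp_all add: R3i_def)


abbreviation "gen3 \<equiv> generate (perm_group stickers3) (moves stickers3)"
abbreviation "gen2 \<equiv> generate (perm_group corner_stickers) (moves corner_stickers)"

lemma CS_sub_S3: "corner_stickers \<subseteq> stickers3"
  by (simp add: stickers3_def)

lemma psi_lm: "psi (layer_move stickers3 f R) = layer_move corner_stickers f R"
  by (rule ext) (auto simp: psi_def layer_move_def stickers3_def)

lemma psi_moves: "psi U3 = U2" "psi D3 = D2" "psi F3 = F2" "psi B3 = B2" "psi L3 = L2" "psi R3 = R2"
  by (simp_all add: U3_def U2_def D3_def D2_def F3_def F2_def B3_def B2_def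
      L3_def L2_def R3_def R2_def psi_lm)

lemma psi_comp:
  assumes "\<And>s. s \<in> corner_stickers \<Longrightarrow> h s \<in> corner_stickers"
  shows "psi (g \<circ> h) = psi g \<circ> psi h"
  using assms by (auto simp: psi_def)

lemma psi_id: "psi id = id"
  by (auto simp: psi_def)

lemma move2_eval: "U2 s = (if s \<in> corner_stickers then U3 s else s)"
  "D2 s = (if s \<in> corner_stickers then D3 s else s)"
  "F2 s = (if s \<in> corner_stickers then F3 s else s)"
  "B2 s = (if s \<in> corner_stickers then B3 s else s)"
  "L2 s = (if s \<in> corner_stickers then L3 s else s)"
  "R2 s = (if s \<in> corner_stickers then R3 s else s)"
  by (simp_all add: psi_moves[symmetric] psi_def)

lemma S3_cases: "s \<in> stickers3 \<Longrightarrow> s \<in> corner_stickers \<or> s \<in> edge_stickers"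
  by (simp add: stickers3_def)

lemma move3_out: "s \<notin> stickers3 \<Longrightarrow> U3 s = s \<and> D3 s = s \<and> F3 s = s \<and> B3 s = s \<and> L3 s = s \<and> R3 s = s"
  by (simp add: U3_def D3_def F3_def B3_def L3_def R3_def layer_move_def)

lemma move3_CS:
  assumes "s \<in> corner_stickers"
  shows "U3 s \<in> corner_stickers \<and> D3 s \<in> corner_stickers \<and> F3 s \<in> corner_stickers \<and>
         B3 s \<in> corner_stickers \<and> L3 s \<in> corner_stickers \<and> R3 s \<in> corner_stickers"
  using assms unfolding CS_eq by auto

lemma move3_quart_pt:
  "U3 (U3 (U3 (U3 s))) = s \<and> D3 (D3 (D3 (D3 s))) = s \<and> F3 (F3 (F3 (F3 s))) = s \<and>
   B3 (B3 (B3 (B3 s))) = s \<and> L3 (L3 (L3 (L3 s))) = s \<and> R3 (R3 (R3 (R3 s))) = s"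
proof (cases "s \<in> stickers3")
  case True
  then have "s \<in> corner_stickers \<or> s \<in> edge_stickers" by (rule S3_cases)
  then show ?thesis unfolding CS_eq ES_eq by auto
next
  case False then show ?thesis using move3_out by simp
qed

lemma moves3_quart: "m \<in> moves stickers3 \<Longrightarrow> m \<circ> m \<circ> m \<circ> m = id"
  unfolding moves3_eq using move3_quart_pt by (auto intro!: ext)

lemma lm_quart2:
  assumes "\<And>s. s \<in> corner_stickers \<Longrightarrow> m3 s \<in> corner_stickers"
    "\<And>s. m3 (m3 (m3 (m3 s))) = s"
    "\<And>s. m2 s = (if s \<in> corner_stickers then m3 s else s)"
  shows "m2 (m2 (m2 (m2 s))) = s"
  by (cases "s \<in> corner_stickers") (simp_all add: assms)

lemma move2_quart_pt:
  "U2 (U2 (U2 (U2 s))) = s \<and> D2 (D2 (D2 (D2 s))) = s \<and> F2 (F2 (F2 (F2 s))) = s \<and>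
   B2 (B2 (B2 (B2 s))) = s \<and> L2 (L2 (L2 (L2 s))) = s \<and> R2 (R2 (R2 (R2 s))) = s"
  by (intro conjI lm_quart2[OF _ _ move2_eval(1)] lm_quart2[OF _ _ move2_eval(2)]
      lm_quart2[OF _ _ move2_eval(3)] lm_quart2[OF _ _ move2_eval(4)]
      lm_quart2[OF _ _ move2_eval(5)] lm_quart2[OF _ _ move2_eval(6)])
     (simp_all add: move3_CS move3_quart_pt)

lemma moves2_quart: "m \<in> moves corner_stickers \<Longrightarrow> m \<circ> m \<circ> m \<circ> m = id"
  unfolding moves2_eq using move2_quart_pt by (auto intro!: ext)

lemma moves3_perm: "moves stickers3 \<subseteq> {p. p permutes stickers3}"
proof
  fix m assume m: "m \<in> moves stickers3"
  have "\<And>x. x \<notin> stickers3 \<Longrightarrow> m x = x" using m move3_out unfolding moves3_eq by auto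
  from quarter_permutes[OF this moves3_quart[OF m]] show "m \<in> {p. p permutes stickers3}" by simp
qed

lemma moves2_perm: "moves corner_stickers \<subseteq> {p. p permutes corner_stickers}"
proof
  fix m assume m: "m \<in> moves corner_stickers"
  have "\<And>x. x \<notin> corner_stickers \<Longrightarrow> m x = x" using m unfolding moves2_eq by (auto simp: move2_eval)
  from quarter_permutes[OF this moves2_quart[OF m]] show "m \<in> {p. p permutes corner_stickers}" by simp
qed

lemma gen3_perm: "g \<in> gen3 \<Longrightarrow> g permutes stickers3"
  by (rule generate_perm_sub[OF moves3_perm])

lemma gen2_perm: "g \<in> gen2 \<Longrightarrow> g permutes corner_stickers"
  by (rule generate_perm_sub[OF moves2_perm])

lemma gen3_psi:
  assumes "g \<in> gen3"
  shows "(\<forall>s\<in>corner_stickers. g s \<in> corner_stickers) \<and> psi g \<in> gen2"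
proof (rule gen_induct[OF moves3_perm _ _ _ _ assms,
    where P = "\<lambda>g. (\<forall>s\<in>corner_stickers. g s \<in> corner_stickers) \<and> psi g \<in> gen2"])
  show "\<And>m. m \<in> moves stickers3 \<Longrightarrow> m \<circ> m \<circ> m \<circ> m = id" by (rule moves3_quart)
next
  show "(\<forall>s\<in>corner_stickers. id s \<in> corner_stickers) \<and> psi id \<in> gen2"
    using generate.one[of "perm_group corner_stickers"] psi_id by simp
next
  fix m assume "m \<in> moves stickers3"
  then have "m \<in> {U3, D3, F3, B3, L3, R3}" by (simp add: moves3_eq)
  then have "psi m \<in> moves corner_stickers" by (auto simp: moves2_eq psi_moves)
  moreover have "\<forall>s\<in>corner_stickers. m s \<in> corner_stickers"
    using \<open>m \<in> {U3, D3, F3, B3, L3, R3}\<close> move3_CS by auto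
  ultimately show "(\<forall>s\<in>corner_stickers. m s \<in> corner_stickers) \<and> psi m \<in> gen2"
    by (auto intro: generate.incl)
next
  fix g h assume a: "g \<in> gen3" "h \<in> gen3"
    "(\<forall>s\<in>corner_stickers. g s \<in> corner_stickers) \<and> psi g \<in> gen2"
    "(\<forall>s\<in>corner_stickers. h s \<in> corner_stickers) \<and> psi h \<in> gen2"
  then have "psi (g \<circ> h) = psi g \<circ> psi h" by (intro psi_comp) auto
  then show "(\<forall>s\<in>corner_stickers. (g \<circ> h) s \<in> corner_stickers) \<and> psi (g \<circ> h) \<in> gen2"
    using a gen_comp by auto
qed

section \<open>Orientation bookkeeping on corner stickers\<close>

definition ey :: "vec \<Rightarrow> vec" where "ey p = (0, fst (snd p), 0)"

definition nxt :: "sticker \<Rightarrow> sticker" where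
  "nxt s = (case s of ((x,y,z),(a,b,c)) \<Rightarrow>
     if x*y*z = 1 then (if a \<noteq> 0 then ((x,y,z),(0,y,0)) else if b \<noteq> 0 then ((x,y,z),(0,0,z)) else ((x,y,z),(x,0,0)))
     else (if a \<noteq> 0 then ((x,y,z),(0,0,z)) else if c \<noteq> 0 then ((x,y,z),(0,y,0)) else ((x,y,z),(x,0,0))))"

definition wt :: "sticker \<Rightarrow> nat" where
  "wt s = (if s = (fst s, ey (fst s)) then 0 else if s = nxt (fst s, ey (fst s)) then 1 else 2)"

definition tw :: "(vec \<Rightarrow> nat) \<Rightarrow> sticker \<Rightarrow> sticker" where
  "tw k s = (if s \<in> corner_stickers then (nxt ^^ k (fst s)) s else s)"

definition Tsum :: "(sticker \<Rightarrow> sticker) \<Rightarrow> nat" where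
  "Tsum g = (\<Sum>p\<in>corner_positions. wt (g (p, ey p)))"

definition goodc :: "(sticker \<Rightarrow> sticker) \<Rightarrow> bool" where
  "goodc g \<longleftrightarrow> (\<forall>s\<in>corner_stickers. g s \<in> corner_stickers \<and> g (nxt s) = nxt (g s))"

lemma funpow_small: "(f ^^ 0) x = x" "(f ^^ 1) x = f x" "(f ^^ 2) x = f (f x)"
  by (simp_all add: numeral_2_eq_2)

lemma nxt_CS: "s \<in> corner_stickers \<Longrightarrow> nxt s \<in> corner_stickers \<and> fst (nxt s) = fst s"
  unfolding CS_eq by (auto simp: nxt_def)

lemma nxt3: "s \<in> corner_stickers \<Longrightarrow> nxt (nxt (nxt s)) = s"
  unfolding CS_eq by (auto simp: nxt_def)

lemma wt_nxt: "s \<in> corner_stickers \<Longrightarrow> wt (nxt s) = (wt s + 1) mod 3"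
  unfolding CS_eq by (auto simp: nxt_def wt_def ey_def)

lemma wt_lt: "wt s < 3"
  by (simp add: wt_def)

lemma wt_base: "s \<in> corner_stickers \<Longrightarrow> s = (nxt ^^ wt s) (fst s, ey (fst s))"
  unfolding CS_eq by (auto simp: nxt_def wt_def ey_def funpow_small)

lemma fst_CS: "s \<in> corner_stickers \<Longrightarrow> fst s \<in> corner_positions"
  by (auto simp: corner_stickers_def)

lemma base_CS: assumes "p \<in> corner_positions"
  shows "(p, ey p) \<in> corner_stickers \<and> (p, (fst p, 0, 0)) \<in> corner_stickers"
proof -
  obtain x y z where p: "p = (x,y,z)" by (cases p) auto
  have "x \<noteq> 0" "y \<noteq> 0" using assms p by (auto simp: corner_positions_def)
  then show ?thesis using assms p by (simp add: corner_stickers_def axis_vecs_def ey_def)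
qed

lemma wt_base0: "wt (p, ey p) = 0"
  by (simp add: wt_def)

lemma nxt_pow_CS: "s \<in> corner_stickers \<Longrightarrow> (nxt ^^ j) s \<in> corner_stickers \<and> fst ((nxt ^^ j) s) = fst s"
proof (induction j)
  case 0 then show ?case by simp
next
  case (Suc j) then show ?case using nxt_CS[of "(nxt ^^ j) s"] by simp
qed

lemma nxt_pow3: "s \<in> corner_stickers \<Longrightarrow> (nxt ^^ (3 * q)) s = s"
proof (induction q)
  case 0 then show ?case by simp
next
  case (Suc q)
  have "(nxt ^^ (3 * Suc q)) s = (nxt ^^ 3) ((nxt ^^ (3 * q)) s)"
    by (simp add: funpow_add)
  also have "\<dots> = (nxt ^^ 3) s" using Suc by simp
  also have "\<dots> = s" using nxt3[OF Suc.prems] by (simp add: numeral_3_eq_3)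
  finally show ?case .
qed

lemma nxt_pow_mod: "s \<in> corner_stickers \<Longrightarrow> (nxt ^^ j) s = (nxt ^^ (j mod 3)) s"
proof -
  assume s: "s \<in> corner_stickers"
  have "(nxt ^^ j) s = (nxt ^^ (j mod 3 + 3 * (j div 3))) s" by simp
  also have "\<dots> = (nxt ^^ (j mod 3)) ((nxt ^^ (3 * (j div 3))) s)" by (simp only: funpow_add comp_apply)
  also have "\<dots> = (nxt ^^ (j mod 3)) s" using nxt_pow3[OF s] by simp
  finally show ?thesis .
qed

lemma wt_pow: "s \<in> corner_stickers \<Longrightarrow> wt ((nxt ^^ j) s) = (wt s + j) mod 3"
proof (induction j)
  case 0 then show ?case using wt_lt[of s] by simp
next
  case (Suc j)
  have "wt ((nxt ^^ Suc j) s) = (wt ((nxt ^^ j) s) + 1) mod 3"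
    using wt_nxt nxt_pow_CS[OF Suc.prems] by simp
  also have "\<dots> = (wt s + Suc j) mod 3" using Suc by (simp add: mod_Suc_eq)
  finally show ?case .
qed

lemma goodc_pow: "goodc g \<Longrightarrow> s \<in> corner_stickers \<Longrightarrow> g ((nxt ^^ j) s) = (nxt ^^ j) (g s)"
proof (induction j)
  case 0 then show ?case by simp
next
  case (Suc j)
  then show ?case using nxt_pow_CS[OF Suc.prems(2), of j] by (simp add: goodc_def)
qed

lemma goodc_CS: "goodc g \<Longrightarrow> s \<in> corner_stickers \<Longrightarrow> g s \<in> corner_stickers"
  by (simp add: goodc_def)

lemma wt_shift:
  assumes g: "goodc g" and s: "s \<in> corner_stickers"
  shows "wt (g s) = (wt (g (fst s, ey (fst s))) + wt s) mod 3"
proof -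
  let ?b = "(fst s, ey (fst s))"
  have b: "?b \<in> corner_stickers" using base_CS fst_CS[OF s] by blast
  have "g s = g ((nxt ^^ wt s) ?b)" using wt_base[OF s] by simp
  also have "\<dots> = (nxt ^^ wt s) (g ?b)" using goodc_pow[OF g b] .
  finally show ?thesis using wt_pow[OF goodc_CS[OF g b]] by simp
qed

lemma same_pos:
  assumes u: "u \<in> corner_stickers" and v: "v \<in> corner_stickers" and e: "fst u = fst v"
  shows "\<exists>j. u = (nxt ^^ j) v"
proof -
  let ?b = "(fst u, ey (fst u))"
  have b: "?b \<in> corner_stickers" using base_CS fst_CS[OF u] by blast
  have hu: "u = (nxt ^^ wt u) ?b" using wt_base[OF u] .
  have hv: "v = (nxt ^^ wt v) ?b" using wt_base[OF v] e by simp
  have "(nxt ^^ (wt u + (3 - wt v))) v = (nxt ^^ (wt u + (3 - wt v) + wt v)) ?b"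
    by (subst hv) (simp add: funpow_add)
  also have "wt u + (3 - wt v) + wt v = wt u + 3" using wt_lt[of v] by simp
  also have "(nxt ^^ (wt u + 3)) ?b = (nxt ^^ ((wt u + 3) mod 3)) ?b" using nxt_pow_mod[OF b] .
  also have "\<dots> = (nxt ^^ (wt u mod 3)) ?b" by simp
  also have "\<dots> = (nxt ^^ wt u) ?b" using nxt_pow_mod[OF b] by simp
  also have "\<dots> = u" using hu by simp
  finally show ?thesis by metis
qed

lemma goodc_comp: "goodc g \<Longrightarrow> goodc h \<Longrightarrow> goodc (g \<circ> h)"
  by (simp add: goodc_def)

lemma goodc_id: "goodc id"
  by (simp add: goodc_def)

lemma Tsum_id: "Tsum id = 0"
  by (simp add: Tsum_def wt_base0)

lemma pos_bij:
  assumes h: "goodc h" "h permutes corner_stickers"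
  shows "bij_betw (\<lambda>p. fst (h (p, ey p))) corner_positions corner_positions"
proof -
  let ?f = "\<lambda>p. fst (h (p, ey p))"
  have sub: "?f ` corner_positions \<subseteq> corner_positions"
    using base_CS goodc_CS[OF h(1)] fst_CS by blast
  have inj: "inj_on ?f corner_positions"
  proof (rule inj_onI)
    fix p q assume p: "p \<in> corner_positions" and q: "q \<in> corner_positions" and e: "?f p = ?f q"
    have bp: "(p, ey p) \<in> corner_stickers" and bq: "(q, ey q) \<in> corner_stickers"
      using base_CS p q by auto
    obtain j where j: "h (p, ey p) = (nxt ^^ j) (h (q, ey q))"
      using same_pos[OF goodc_CS[OF h(1) bp] goodc_CS[OF h(1) bq] e] by blast
    also have "\<dots> = h ((nxt ^^ j) (q, ey q))" using goodc_pow[OF h(1) bq] by simp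
    finally have "(p, ey p) = (nxt ^^ j) (q, ey q)"
      using permutes_inj[OF h(2)] by (simp add: inj_eq)
    then have "fst (p, ey p) = fst ((nxt ^^ j) (q, ey q))" by simp
    then show "p = q" using nxt_pow_CS[OF bq] by simp
  qed
  have "?f ` corner_positions = corner_positions"
    by (rule endo_inj_surj[OF _ sub inj]) (simp add: CP_eq)
  then show ?thesis using inj by (simp add: bij_betw_def)
qed

lemma Tsum_comp:
  assumes g: "goodc g" and h: "goodc h" "h permutes corner_stickers"
  shows "Tsum (g \<circ> h) mod 3 = (Tsum g + Tsum h) mod 3"
proof -
  let ?f = "\<lambda>p. fst (h (p, ey p))"
  have hs: "\<And>p. p \<in> corner_positions \<Longrightarrow> h (p, ey p) \<in> corner_stickers"
    using base_CS goodc_CS[OF h(1)] by blast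
  have "Tsum (g \<circ> h) = (\<Sum>p\<in>corner_positions. wt (g (h (p, ey p))))" by (simp add: Tsum_def)
  also have "\<dots> = (\<Sum>p\<in>corner_positions. (wt (g (?f p, ey (?f p))) + wt (h (p, ey p))) mod 3)"
    by (rule sum.cong) (use wt_shift[OF g hs] in auto)
  finally have "Tsum (g \<circ> h) mod 3 =
      (\<Sum>p\<in>corner_positions. (wt (g (?f p, ey (?f p))) + wt (h (p, ey p))) mod 3) mod 3" by simp
  also have "\<dots> = (\<Sum>p\<in>corner_positions. wt (g (?f p, ey (?f p))) + wt (h (p, ey p))) mod 3"
    by (rule mod_sum_eq)
  also have "\<dots> = ((\<Sum>p\<in>corner_positions. wt (g (?f p, ey (?f p)))) + Tsum h) mod 3"
    by (simp add: sum.distrib Tsum_def)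
  also have "(\<Sum>p\<in>corner_positions. wt (g (?f p, ey (?f p)))) = Tsum g"
    unfolding Tsum_def using sum.reindex_bij_betw[OF pos_bij[OF h], of "\<lambda>p. wt (g (p, ey p))"] by simp
  finally show ?thesis .
qed

lemma mem_CS: "((x,y,z),n) \<in> corner_stickers \<longleftrightarrow>
   (x = 1 \<or> x = -1) \<and> (y = 1 \<or> y = -1) \<and> (z = 1 \<or> z = -1) \<and>
   (n = (x,0,0) \<or> n = (0,y,0) \<or> n = (0,0,z))"
  by (auto simp: corner_stickers_def corner_positions_def axis_vecs_def)

lemma moves2_comm:
  assumes "s \<in> corner_stickers"
  shows "U2 s \<in> corner_stickers \<and> U2 (nxt s) = nxt (U2 s) \<and>
         D2 s \<in> corner_stickers \<and> D2 (nxt s) = nxt (D2 s) \<and>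
         F2 s \<in> corner_stickers \<and> F2 (nxt s) = nxt (F2 s) \<and>
         B2 s \<in> corner_stickers \<and> B2 (nxt s) = nxt (B2 s) \<and>
         L2 s \<in> corner_stickers \<and> L2 (nxt s) = nxt (L2 s) \<and>
         R2 s \<in> corner_stickers \<and> R2 (nxt s) = nxt (R2 s)"
  using assms[unfolded CS_eq] unfolding move2_eval by (elim insertE emptyE) (simp_all add: mem_CS nxt_def)

lemma moves2_Tsum: "Tsum U2 mod 3 = 0" "Tsum D2 mod 3 = 0" "Tsum F2 mod 3 = 0"
    "Tsum B2 mod 3 = 0" "Tsum L2 mod 3 = 0" "Tsum R2 mod 3 = 0"
  unfolding Tsum_def move2_eval CP_eq by (simp_all add: mem_CS ey_def wt_def nxt_def)

lemma moves2_good: "m \<in> moves corner_stickers \<Longrightarrow> goodc m \<and> Tsum m mod 3 = 0"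
  unfolding moves2_eq goodc_def using moves2_comm moves2_Tsum by auto

lemma gen2_good: assumes "g \<in> gen2" shows "goodc g \<and> Tsum g mod 3 = 0"
proof (rule gen_induct[OF moves2_perm _ _ _ _ assms, where P = "\<lambda>g. goodc g \<and> Tsum g mod 3 = 0"])
  show "\<And>m. m \<in> moves corner_stickers \<Longrightarrow> m \<circ> m \<circ> m \<circ> m = id" by (rule moves2_quart)
next
  show "goodc id \<and> Tsum id mod 3 = 0" using goodc_id Tsum_id by simp
next
  fix m assume "m \<in> moves corner_stickers" then show "goodc m \<and> Tsum m mod 3 = 0" by (rule moves2_good)
next
  fix g h assume a: "g \<in> gen2" "h \<in> gen2" "goodc g \<and> Tsum g mod 3 = 0" "goodc h \<and> Tsum h mod 3 = 0"
  have "Tsum (g \<circ> h) mod 3 = (Tsum g + Tsum h) mod 3"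
    using a gen2_perm[OF a(2)] by (intro Tsum_comp) auto
  also have "\<dots> = (Tsum g mod 3 + Tsum h mod 3) mod 3" by (simp add: mod_add_eq)
  finally show "goodc (g \<circ> h) \<and> Tsum (g \<circ> h) mod 3 = 0" using a goodc_comp by simp
qed


section \<open>The subgroup L and its image\<close>

lemma moves_gen: "U3 \<in> gen3" "D3 \<in> gen3" "F3 \<in> gen3" "B3 \<in> gen3" "L3 \<in> gen3" "R3 \<in> gen3"
  "U3i \<in> gen3" "D3i \<in> gen3" "F3i \<in> gen3" "B3i \<in> gen3" "L3i \<in> gen3" "R3i \<in> gen3"
proof -
  show g: "U3 \<in> gen3" "D3 \<in> gen3" "F3 \<in> gen3" "B3 \<in> gen3" "L3 \<in> gen3" "R3 \<in> gen3"
    by (auto intro: generate.incl simp: moves3_eq)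
  show "U3i \<in> gen3" "D3i \<in> gen3" "F3i \<in> gen3" "B3i \<in> gen3" "L3i \<in> gen3" "R3i \<in> gen3"
    unfolding U3i_def D3i_def F3i_def B3i_def L3i_def R3i_def by (intro gen_comp g)+
qed

lemma carrier_G3: "carrier G3 = gen3" by (simp add: G3_def)
lemma carrier_G2: "carrier G2 = gen2" by (simp add: G2_def)

lemma CP_EP: "p \<in> corner_positions \<Longrightarrow> p \<notin> edge_positions"
  unfolding CP_eq EP_eq by auto

lemma fst_ES: "s \<in> edge_stickers \<Longrightarrow> fst s \<in> edge_positions"
  by (cases s) (simp add: edge_stickers_def)

lemma L_CS:
  assumes l: "l \<in> L_sub" and s: "s \<in> corner_stickers"
  shows "l s \<in> corner_stickers"
proof -
  have lp: "l permutes stickers3" using l gen3_perm by (simp add: L_sub_def carrier_G3)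
  have "s \<in> stickers3" using s CS_sub_S3 by blast
  then have "l s \<in> stickers3" using permutes_in_image[OF lp] by simp
  moreover have "fst (l s) = fst s" using l s by (simp add: L_sub_def)
  moreover have "fst s \<in> corner_positions" using fst_CS[OF s] .
  ultimately show ?thesis using CP_EP fst_ES S3_cases by metis
qed

lemma L_comp: "x \<in> L_sub \<Longrightarrow> y \<in> L_sub \<Longrightarrow> x \<circ> y \<in> L_sub"
proof -
  assume x: "x \<in> L_sub" and y: "y \<in> L_sub"
  have "x \<circ> y \<in> gen3" using x y gen_comp by (auto simp: L_sub_def carrier_G3)
  moreover have "\<forall>s\<in>edge_stickers. (x \<circ> y) s = s" using x y by (simp add: L_sub_def)
  moreover have "\<forall>s\<in>corner_stickers. fst ((x \<circ> y) s) = fst s"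
    using x y L_CS[OF y] by (simp add: L_sub_def)
  ultimately show ?thesis by (simp add: L_sub_def carrier_G3)
qed

lemma id_L: "id \<in> L_sub"
  using generate.one[of "perm_group stickers3" "moves stickers3"] by (simp add: L_sub_def carrier_G3)

lemma psi_L_K: "l \<in> L_sub \<Longrightarrow> psi l \<in> K_sub"
proof -
  assume l: "l \<in> L_sub"
  have "psi l \<in> gen2" using gen3_psi l by (simp add: L_sub_def carrier_G3)
  moreover have "phi (psi l) = id"
  proof (rule ext)
    fix p show "phi (psi l) p = id p"
    proof (cases "p \<in> corner_positions")
      case True
      then have "(p, (fst p, 0, 0)) \<in> corner_stickers" using base_CS by blast
      then show ?thesis using l True by (simp add: phi_def psi_def L_sub_def)
    qed (simp add: phi_def)
  qed
  ultimately show ?thesis by (simp add: K_sub_def kernel_def carrier_G2 S8_def)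
qed

lemma psi_L_comp: "x \<in> L_sub \<Longrightarrow> y \<in> L_sub \<Longrightarrow> psi (x \<circ> y) = psi x \<circ> psi y"
  by (rule psi_comp) (rule L_CS)

lemma Q_comp: "a \<in> psi ` L_sub \<Longrightarrow> b \<in> psi ` L_sub \<Longrightarrow> a \<circ> b \<in> psi ` L_sub"
proof -
  assume "a \<in> psi ` L_sub" "b \<in> psi ` L_sub"
  then obtain x y where x: "x \<in> L_sub" "a = psi x" and y: "y \<in> L_sub" "b = psi y" by blast
  then have "a \<circ> b = psi (x \<circ> y)" using psi_L_comp by simp
  then show ?thesis using L_comp[OF x(1) y(1)] by blast
qed

lemma Q_id: "id \<in> psi ` L_sub"
proof (rule image_eqI[of _ _ id])
  show "id = psi id" using psi_id by simp
  show "id \<in> L_sub" by (rule id_L)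
qed

lemma tw_comp: "tw a \<circ> tw b = tw (\<lambda>p. a p + b p)"
proof (rule ext)
  fix s show "(tw a \<circ> tw b) s = tw (\<lambda>p. a p + b p) s"
  proof (cases "s \<in> corner_stickers")
    case True
    then show ?thesis using nxt_pow_CS[OF True, of "b (fst s)"]
      by (simp add: tw_def funpow_add)
  qed (simp add: tw_def)
qed

lemma tw_mod: "(\<And>p. p \<in> corner_positions \<Longrightarrow> a p mod 3 = b p mod 3) \<Longrightarrow> tw a = tw b"
proof (rule ext)
  fix s assume h: "\<And>p. p \<in> corner_positions \<Longrightarrow> a p mod 3 = b p mod 3"
  show "tw a s = tw b s"
  proof (cases "s \<in> corner_stickers")
    case True
    then have "a (fst s) mod 3 = b (fst s) mod 3" using h fst_CS by blast
    then show ?thesis using True nxt_pow_mod[OF True, of "a (fst s)"] nxt_pow_mod[OF True, of "b (fst s)"]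
      by (simp add: tw_def)
  qed (simp add: tw_def)
qed

lemma tw_zero: "tw (\<lambda>p. 0) = id"
  by (rule ext) (simp add: tw_def)

lemma tw_add_Q: "tw a \<in> psi ` L_sub \<Longrightarrow> tw b \<in> psi ` L_sub \<Longrightarrow> tw (\<lambda>p. a p + b p) \<in> psi ` L_sub"
proof -
  assume "tw a \<in> psi ` L_sub" "tw b \<in> psi ` L_sub"
  then have "tw a \<circ> tw b \<in> psi ` L_sub" by (rule Q_comp)
  then show ?thesis by (simp only: tw_comp)
qed

lemma tw_mult_Q: "tw a \<in> psi ` L_sub \<Longrightarrow> tw (\<lambda>p. n * a p) \<in> psi ` L_sub"
proof (induction n)
  case 0
  have "tw (\<lambda>p. 0 * a p) = id" using tw_zero by simp
  then show ?case using Q_id by (simp only:)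
next
  case (Suc n)
  have "tw (\<lambda>p. a p + n * a p) \<in> psi ` L_sub" by (rule tw_add_Q[OF Suc.prems Suc.IH[OF Suc.prems]])
  then show ?case by simp
qed

lemma W_Q:
  assumes g: "W \<in> gen3" and e: "\<And>s. s \<in> edge_stickers \<Longrightarrow> W s = s"
    and c: "\<And>s. s \<in> corner_stickers \<Longrightarrow> W s = tw a s"
  shows "tw a \<in> psi ` L_sub"
proof -
  have "\<forall>s\<in>corner_stickers. fst (W s) = fst s"
    using c nxt_pow_CS by (simp add: tw_def)
  then have W: "W \<in> L_sub" using g e by (simp add: L_sub_def carrier_G3)
  have pw: "psi W = tw a"
    by (rule ext) (simp add: psi_def c tw_def)
  show ?thesis
  proof (rule image_eqI[of _ _ W])
    show "tw a = psi W" using pw by simp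
    show "W \<in> L_sub" by (rule W)
  qed
qed

definition aa :: "vec \<Rightarrow> vec \<Rightarrow> nat" where
  "aa P q = (if q = P then 1 else if q = (- 1, - 1, - 1) then 2 else 0)"

definition W1 :: "sticker \<Rightarrow> sticker" where
  "W1 = L3i \<circ> B3 \<circ> D3i \<circ> R3i \<circ> D3 \<circ> R3 \<circ> D3i \<circ> R3i \<circ> D3 \<circ> R3 \<circ> U3i \<circ> R3i \<circ> D3i \<circ> R3 \<circ> D3 \<circ> R3i \<circ> D3i \<circ> R3 \<circ> D3 \<circ> U3 \<circ> B3i \<circ> L3"

lemma W1_gen: "W1 \<in> gen3"
  unfolding W1_def by (intro gen_comp moves_gen)

lemma W1_edge: assumes "s \<in> edge_stickers" shows "W1 s = s"
  using assms[unfolded ES_eq] unfolding W1_def by (elim insertE emptyE) simp_all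

lemma W1_corner: assumes "s \<in> corner_stickers" shows "W1 s = tw (aa (- 1, - 1, 1)) s"
  using assms[unfolded CS_eq] unfolding W1_def tw_def
  by (elim insertE emptyE) (simp_all add: mem_CS aa_def nxt_def funpow_small)

lemma W1_Q: "tw (aa (- 1, - 1, 1)) \<in> psi ` L_sub"
  by (rule W_Q[OF W1_gen W1_edge W1_corner])

definition W2 :: "sticker \<Rightarrow> sticker" where
  "W2 = B3 \<circ> R3i \<circ> D3i \<circ> R3 \<circ> D3 \<circ> R3i \<circ> D3i \<circ> R3 \<circ> D3 \<circ> U3i \<circ> D3i \<circ> R3i \<circ> D3 \<circ> R3 \<circ> D3i \<circ> R3i \<circ> D3 \<circ> R3 \<circ> U3 \<circ> B3i"

lemma W2_gen: "W2 \<in> gen3"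
  unfolding W2_def by (intro gen_comp moves_gen)

lemma W2_edge: assumes "s \<in> edge_stickers" shows "W2 s = s"
  using assms[unfolded ES_eq] unfolding W2_def by (elim insertE emptyE) simp_all

lemma W2_corner: assumes "s \<in> corner_stickers" shows "W2 s = tw (aa (- 1, 1, - 1)) s"
  using assms[unfolded CS_eq] unfolding W2_def tw_def
  by (elim insertE emptyE) (simp_all add: mem_CS aa_def nxt_def funpow_small)

lemma W2_Q: "tw (aa (- 1, 1, - 1)) \<in> psi ` L_sub"
  by (rule W_Q[OF W2_gen W2_edge W2_corner])

definition W3 :: "sticker \<Rightarrow> sticker" where
  "W3 = D3 \<circ> R3 \<circ> D3i \<circ> R3i \<circ> D3 \<circ> R3 \<circ> D3i \<circ> R3i \<circ> D3 \<circ> R3 \<circ> U3 \<circ> U3 \<circ> R3i \<circ> D3i \<circ> R3 \<circ> D3 \<circ> R3i \<circ> D3i \<circ> R3 \<circ> D3 \<circ> U3i \<circ> U3i \<circ> R3i \<circ> D3i"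

lemma W3_gen: "W3 \<in> gen3"
  unfolding W3_def by (intro gen_comp moves_gen)

lemma W3_edge: assumes "s \<in> edge_stickers" shows "W3 s = s"
  using assms[unfolded ES_eq] unfolding W3_def by (elim insertE emptyE) simp_all

lemma W3_corner: assumes "s \<in> corner_stickers" shows "W3 s = tw (aa (- 1, 1, 1)) s"
  using assms[unfolded CS_eq] unfolding W3_def tw_def
  by (elim insertE emptyE) (simp_all add: mem_CS aa_def nxt_def funpow_small)

lemma W3_Q: "tw (aa (- 1, 1, 1)) \<in> psi ` L_sub"
  by (rule W_Q[OF W3_gen W3_edge W3_corner])

definition W4 :: "sticker \<Rightarrow> sticker" where
  "W4 = B3 \<circ> B3 \<circ> D3i \<circ> R3i \<circ> D3 \<circ> R3 \<circ> D3i \<circ> R3i \<circ> D3 \<circ> R3 \<circ> U3i \<circ> R3i \<circ> D3i \<circ> R3 \<circ> D3 \<circ> R3i \<circ> D3i \<circ> R3 \<circ> D3 \<circ> U3 \<circ> B3i \<circ> B3i"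

lemma W4_gen: "W4 \<in> gen3"
  unfolding W4_def by (intro gen_comp moves_gen)

lemma W4_edge: assumes "s \<in> edge_stickers" shows "W4 s = s"
  using assms[unfolded ES_eq] unfolding W4_def by (elim insertE emptyE) simp_all

lemma W4_corner: assumes "s \<in> corner_stickers" shows "W4 s = tw (aa (1, - 1, - 1)) s"
  using assms[unfolded CS_eq] unfolding W4_def tw_def
  by (elim insertE emptyE) (simp_all add: mem_CS aa_def nxt_def funpow_small)

lemma W4_Q: "tw (aa (1, - 1, - 1)) \<in> psi ` L_sub"
  by (rule W_Q[OF W4_gen W4_edge W4_corner])

definition W5 :: "sticker \<Rightarrow> sticker" where
  "W5 = D3 \<circ> L3 \<circ> R3 \<circ> D3i \<circ> R3i \<circ> D3 \<circ> R3 \<circ> D3i \<circ> R3i \<circ> D3 \<circ> R3 \<circ> U3 \<circ> U3 \<circ> R3i \<circ> D3i \<circ> R3 \<circ> D3 \<circ> R3i \<circ> D3i \<circ> R3 \<circ> D3 \<circ> U3i \<circ> U3i \<circ> R3i \<circ> L3i \<circ> D3i"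

lemma W5_gen: "W5 \<in> gen3"
  unfolding W5_def by (intro gen_comp moves_gen)

lemma W5_edge: assumes "s \<in> edge_stickers" shows "W5 s = s"
  using assms[unfolded ES_eq] unfolding W5_def by (elim insertE emptyE) simp_all

lemma W5_corner: assumes "s \<in> corner_stickers" shows "W5 s = tw (aa (1, - 1, 1)) s"
  using assms[unfolded CS_eq] unfolding W5_def tw_def
  by (elim insertE emptyE) (simp_all add: mem_CS aa_def nxt_def funpow_small)

lemma W5_Q: "tw (aa (1, - 1, 1)) \<in> psi ` L_sub"
  by (rule W_Q[OF W5_gen W5_edge W5_corner])

definition W6 :: "sticker \<Rightarrow> sticker" where
  "W6 = L3i \<circ> R3i \<circ> D3i \<circ> R3 \<circ> D3 \<circ> R3i \<circ> D3i \<circ> R3 \<circ> D3 \<circ> U3i \<circ> D3i \<circ> R3i \<circ> D3 \<circ> R3 \<circ> D3i \<circ> R3i \<circ> D3 \<circ> R3 \<circ> U3 \<circ> L3"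

lemma W6_gen: "W6 \<in> gen3"
  unfolding W6_def by (intro gen_comp moves_gen)

lemma W6_edge: assumes "s \<in> edge_stickers" shows "W6 s = s"
  using assms[unfolded ES_eq] unfolding W6_def by (elim insertE emptyE) simp_all

lemma W6_corner: assumes "s \<in> corner_stickers" shows "W6 s = tw (aa (1, 1, - 1)) s"
  using assms[unfolded CS_eq] unfolding W6_def tw_def
  by (elim insertE emptyE) (simp_all add: mem_CS aa_def nxt_def funpow_small)

lemma W6_Q: "tw (aa (1, 1, - 1)) \<in> psi ` L_sub"
  by (rule W_Q[OF W6_gen W6_edge W6_corner])

definition W7 :: "sticker \<Rightarrow> sticker" where
  "W7 = U3 \<circ> L3i \<circ> R3i \<circ> D3i \<circ> R3 \<circ> D3 \<circ> R3i \<circ> D3i \<circ> R3 \<circ> D3 \<circ> U3i \<circ> D3i \<circ> R3i \<circ> D3 \<circ> R3 \<circ> D3i \<circ> R3i \<circ> D3 \<circ> R3 \<circ> U3 \<circ> L3 \<circ> U3i"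

lemma W7_gen: "W7 \<in> gen3"
  unfolding W7_def by (intro gen_comp moves_gen)

lemma W7_edge: assumes "s \<in> edge_stickers" shows "W7 s = s"
  using assms[unfolded ES_eq] unfolding W7_def by (elim insertE emptyE) simp_all

lemma W7_corner: assumes "s \<in> corner_stickers" shows "W7 s = tw (aa (1, 1, 1)) s"
  using assms[unfolded CS_eq] unfolding W7_def tw_def
  by (elim insertE emptyE) (simp_all add: mem_CS aa_def nxt_def funpow_small)

lemma W7_Q: "tw (aa (1, 1, 1)) \<in> psi ` L_sub"
  by (rule W_Q[OF W7_gen W7_edge W7_corner])

lemma funpow_comm: "(f ^^ m) ((f ^^ n) x) = (f ^^ n) ((f ^^ m) x)"
proof -
  have "(f ^^ m) ((f ^^ n) x) = (f ^^ (m + n)) x" by (simp add: funpow_add)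
  also have "\<dots> = (f ^^ (n + m)) x" by (simp add: add.commute)
  also have "\<dots> = (f ^^ n) ((f ^^ m) x)" by (simp add: funpow_add)
  finally show ?thesis .
qed

lemma arith2: "(a + b) mod 3 = (0::nat) \<Longrightarrow> a mod 3 = (2 * b) mod 3"
  by presburger

lemma arith8:
  "(k8 + (k1 + (k2 + (k3 + (k4 + (k5 + (k6 + k7))))))) mod 3 = (0::nat) \<Longrightarrow>
   k8 mod 3 = (2 * (k1 + (k2 + (k3 + (k4 + (k5 + (k6 + k7))))))) mod 3"
  by (rule arith2)

lemma tw_Q:
  assumes h: "(\<Sum>p\<in>corner_positions. k p) mod 3 = 0"
  shows "tw k \<in> psi ` L_sub"
proof -
  define c where "c = (\<lambda>p. k (- 1, - 1, 1) * aa (- 1, - 1, 1) p + (k (- 1, 1, - 1) * aa (- 1, 1, - 1) p +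
     (k (- 1, 1, 1) * aa (- 1, 1, 1) p + (k (1, - 1, - 1) * aa (1, - 1, - 1) p +
     (k (1, - 1, 1) * aa (1, - 1, 1) p + (k (1, 1, - 1) * aa (1, 1, - 1) p +
      k (1, 1, 1) * aa (1, 1, 1) p))))))"
  have cQ: "tw c \<in> psi ` L_sub"
    unfolding c_def
    by (intro tw_add_Q tw_mult_Q W1_Q W2_Q W3_Q W4_Q W5_Q W6_Q W7_Q)
  have H: "(k (- 1, - 1, - 1) + (k (- 1, - 1, 1) + (k (- 1, 1, - 1) + (k (- 1, 1, 1) +
     (k (1, - 1, - 1) + (k (1, - 1, 1) + (k (1, 1, - 1) + k (1, 1, 1)))))))) mod 3 = 0"
    using h by (simp add: CP_eq)
  have c8: "c (- 1, - 1, - 1) = 2 * (k (- 1, - 1, 1) + (k (- 1, 1, - 1) + (k (- 1, 1, 1) +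
     (k (1, - 1, - 1) + (k (1, - 1, 1) + (k (1, 1, - 1) + k (1, 1, 1)))))))"
    by (simp add: c_def aa_def)
  have "tw k = tw c"
  proof (rule tw_mod)
    fix p assume "p \<in> corner_positions"
    then have "p = (- 1, - 1, - 1) \<or> p = (- 1, - 1, 1) \<or> p = (- 1, 1, - 1) \<or> p = (- 1, 1, 1) \<or>
      p = (1, - 1, - 1) \<or> p = (1, - 1, 1) \<or> p = (1, 1, - 1) \<or> p = (1, 1, 1)" by (simp add: CP_eq)
    then show "k p mod 3 = c p mod 3"
    proof (elim disjE)
      assume "p = (- 1, - 1, - 1)" then show ?thesis using arith8[OF H] c8 by simp
    qed (simp_all add: c_def aa_def)
  qed
  then show ?thesis using cQ by simp
qed

lemma K_tw:
  assumes k: "k \<in> K_sub"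
  shows "k = tw (\<lambda>p. wt (k (p, ey p))) \<and> (\<Sum>p\<in>corner_positions. wt (k (p, ey p))) mod 3 = 0"
proof -
  have kg: "k \<in> gen2" and kphi: "phi k = id" using k by (simp_all add: K_sub_def kernel_def carrier_G2 S8_def)
  have good: "goodc k" and ts: "Tsum k mod 3 = 0" using gen2_good[OF kg] by auto
  have kp: "k permutes corner_stickers" using gen2_perm[OF kg] .
  have pos: "fst (k (p, ey p)) = p" if p: "p \<in> corner_positions" for p
  proof -
    have b: "(p, ey p) \<in> corner_stickers" "(p, (fst p, 0, 0)) \<in> corner_stickers" using base_CS[OF p] by auto
    have "fst (k (p, (fst p, 0, 0))) = p" using fun_cong[OF kphi, of p] p by (simp add: phi_def)
    moreover obtain j where "(p, (fst p, 0, 0)) = (nxt ^^ j) (p, ey p)"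
      using same_pos[OF b(2) b(1)] by auto
    then have "k (p, (fst p, 0, 0)) = (nxt ^^ j) (k (p, ey p))" using goodc_pow[OF good b(1)] by simp
    ultimately show ?thesis using nxt_pow_CS[OF goodc_CS[OF good b(1)], of j] by simp
  qed
  have "k s = tw (\<lambda>p. wt (k (p, ey p))) s" for s
  proof (cases "s \<in> corner_stickers")
    case True
    let ?p = "fst s"
    have p: "?p \<in> corner_positions" using fst_CS[OF True] .
    have b: "(?p, ey ?p) \<in> corner_stickers" using base_CS[OF p] by auto
    have kb: "k (?p, ey ?p) \<in> corner_stickers" using goodc_CS[OF good b] .
    have e1: "k (?p, ey ?p) = (nxt ^^ wt (k (?p, ey ?p))) (?p, ey ?p)"
      using wt_base[OF kb] pos[OF p] by simp
    have "k s = k ((nxt ^^ wt s) (?p, ey ?p))" using wt_base[OF True] by simp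
    also have "\<dots> = (nxt ^^ wt s) (k (?p, ey ?p))" using goodc_pow[OF good b] .
    also have "\<dots> = (nxt ^^ wt s) ((nxt ^^ wt (k (?p, ey ?p))) (?p, ey ?p))" using e1 by simp
    also have "\<dots> = (nxt ^^ wt (k (?p, ey ?p))) ((nxt ^^ wt s) (?p, ey ?p))"
      by (rule funpow_comm)
    also have "\<dots> = (nxt ^^ wt (k (?p, ey ?p))) s" using wt_base[OF True] by simp
    finally show ?thesis using True by (simp add: tw_def)
  next
    case False
    then show ?thesis using permutes_not_in[OF kp False] by (simp add: tw_def)
  qed
  then have keq: "k = tw (\<lambda>p. wt (k (p, ey p)))" by (rule ext)
  have "(\<Sum>p\<in>corner_positions. wt (k (p, ey p))) mod 3 = 0" using ts unfolding Tsum_def .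
  with keq show ?thesis by (rule conjI)
qed

theorem proposition3p8:
  shows "psi \<in> iso (G3\<lparr>carrier := L_sub\<rparr>) (G2\<lparr>carrier := K_sub\<rparr>)"
proof -
  have hom: "psi \<in> hom (G3\<lparr>carrier := L_sub\<rparr>) (G2\<lparr>carrier := K_sub\<rparr>)"
    unfolding hom_def using psi_L_K psi_L_comp by (auto simp: G3_def G2_def perm_group_def)
  have inj: "inj_on psi L_sub"
  proof (rule inj_onI)
    fix x y assume x: "x \<in> L_sub" and y: "y \<in> L_sub" and e: "psi x = psi y"
    have xp: "x permutes stickers3" and yp: "y permutes stickers3"
      using x y gen3_perm by (auto simp: L_sub_def carrier_G3)
    show "x = y"
    proof (rule ext)
      fix s
      consider "s \<in> corner_stickers" | "s \<in> edge_stickers" | "s \<notin> stickers3"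
        by (auto simp: stickers3_def)
      then show "x s = y s"
      proof cases
        case 1 then show ?thesis using fun_cong[OF e, of s] by (simp add: psi_def)
      next
        case 2 then show ?thesis using x y by (simp add: L_sub_def)
      next
        case 3 then show ?thesis using permutes_not_in[OF xp] permutes_not_in[OF yp] by simp
      qed
    qed
  qed
  have surj: "psi ` L_sub = K_sub"
  proof
    show "psi ` L_sub \<subseteq> K_sub" using psi_L_K by blast
  next
    show "K_sub \<subseteq> psi ` L_sub"
    proof
      fix k assume "k \<in> K_sub"
      from K_tw[OF this] show "k \<in> psi ` L_sub" using tw_Q by metis
    qed
  qed
  show ?thesis unfolding iso_def bij_betw_def using hom inj surj by simp
qed

end
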